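(* Let $H_0,H_1$ be Hilbert spaces, let $A$ be self-adjoint on $H_0$ with domain $\mathcal D(A)$ and $\Omega_1$ self-adjoint on $H_1$ with domain $\mathcal D(\Omega_1)$. Let $\Gamma:\mathcal D(\Omega_1)\to H_0$ be linear with $\|\Gamma\phi\|^2\le C\|(\Omega_1+\mathrm i I)\phi\|^2$ for all $\phi\in\mathcal D(\Omega_1)$, some $C<\infty$. For $R>0$ put $\Phi_R=R(\Omega_1^2+R^2I)^{-1/2}$; then $\Gamma\Phi_R:H_1\to H_0$ is bounded, and we write $\Phi_R\Gamma^\dagger:=(\Gamma\Phi_R)^\dagger$. Let $S:=\Gamma(\Omega_1+\mathrm iI)^{-1}:H_1\to H_0$ (bounded). Assume that for every $v\in\mathcal D(A)$ the limit $Gv:=\lim_{R\to\infty}\Gamma\Phi_R S^\dagger v$ exists, and that there are $\delta<1$ and $\beta_\delta>0$ with $\|Gv\|\le\delta\|(A+\mathrm i\beta_\delta I)v\|$ for all $v\in\mathcal D(A)$. Define $$\mathcal D(\mathcal A)=\Big\{\begin{bmatrix}v\\ \phi-S^\dagger v\end{bmatrix}: v\in\mathcal D(A),\ \phi\in\mathcal D(\Omega_1)\Big\}\subset H_0\oplus H_1,$$ and for $[v,w]^T\in\mathcal D(\mathcal A)$ $$\mathcal A\begin{bmatrix}v\\ w\end{bmatrix}:=\lim_{R\to\infty}\begin{bmatrix}Av+\Gamma\Phi_R w\\ \Phi_R\Gamma^\dagger v+\Omega_1\Phi_R w\end{bmatrix}$$ (the limit exists on this domain). Then $\mathcal A$ is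 a self-adjoint operator on $H_0\oplus H_1$.
   Context: All Hilbert spaces are complex; $I$ denotes the identity on the relevant space and $X^\dagger$ the adjoint of $X$. *)

theory Defs
  imports "HOL-Analysis.Analysis"
begin

text \<open>A complex Hilbert space is encoded as a real Hilbert space (type class
real_inner + complete_space) together with an orthogonal complex structure J
(multiplication by the imaginary unit).\<close>

definition cstruct :: "('a::real_inner \<Rightarrow> 'a) \<Rightarrow> bool" where
  "cstruct J \<longleftrightarrow> linear J \<and> (\<forall>x. J (J x) = - x) \<and> (\<forall>x y. inner (J x) (J y) = inner x y)"

definition csc :: "('a::real_vector \<Rightarrow> 'a) \<Rightarrow> complex \<Rightarrow> 'a \<Rightarrow> 'a" where
  "csc J c x = Re c *\<^sub>R x + Im c *\<^sub>R J x"

text \<open>complex inner product, conjugate-linear in the first, linear in the second argument\<close>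
definition cinner :: "('a::real_inner \<Rightarrow> 'a) \<Rightarrow> 'a \<Rightarrow> 'a \<Rightarrow> complex" where
  "cinner J x y = Complex (inner x y) (inner (J x) y)"

definition self_adjoint :: "('a::real_inner \<Rightarrow> 'a) \<Rightarrow> 'a set \<Rightarrow> ('a \<Rightarrow> 'a) \<Rightarrow> bool" where
  "self_adjoint J D T \<longleftrightarrow> closure D = UNIV \<and>
     {(y, z). \<forall>x\<in>D. cinner J (T x) y = cinner J x z} = {(x, T x) | x. x \<in> D}"

definition badj :: "('a::real_inner \<Rightarrow> 'a) \<Rightarrow> ('b::real_inner \<Rightarrow> 'b) \<Rightarrow> ('b \<Rightarrow> 'a) \<Rightarrow> 'a \<Rightarrow> 'b" where
  "badj J0 J1 B y = (THE z. \<forall>x. cinner J0 (B x) y = cinner J1 x z)"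

definition cbounded :: "('a::real_normed_vector \<Rightarrow> 'a) \<Rightarrow> ('b::real_normed_vector \<Rightarrow> 'b) \<Rightarrow> ('a \<Rightarrow> 'b) \<Rightarrow> bool" where
  "cbounded Ja Jb B \<longleftrightarrow> bounded_linear B \<and> (\<forall>x. B (Ja x) = Jb (B x))"

definition resolv :: "('a::real_inner \<Rightarrow> 'a) \<Rightarrow> 'a set \<Rightarrow> ('a \<Rightarrow> 'a) \<Rightarrow> real \<Rightarrow> 'a \<Rightarrow> 'a" where
  "resolv J D Om s y = (THE x. x \<in> D \<and> Om x + s *\<^sub>R J x = y)"

definition sq_inv :: "'a set \<Rightarrow> ('a::real_vector \<Rightarrow> 'a) \<Rightarrow> real \<Rightarrow> 'a \<Rightarrow> 'a" where
  "sq_inv D Om R y = (THE x. x \<in> D \<and> Om x \<in> D \<and> Om (Om x) + (R^2) *\<^sub>R x = y)"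

definition psqrt :: "('a::real_inner \<Rightarrow> 'a) \<Rightarrow> ('a \<Rightarrow> 'a) \<Rightarrow> 'a \<Rightarrow> 'a" where
  "psqrt J K = (THE P. cbounded J J P \<and> (\<forall>x y. cinner J (P x) y = cinner J x (P y))
                   \<and> (\<forall>x. 0 \<le> inner x (P x)) \<and> (\<forall>x. P (P x) = K x))"

definition PhiR :: "('a::real_inner \<Rightarrow> 'a) \<Rightarrow> 'a set \<Rightarrow> ('a \<Rightarrow> 'a) \<Rightarrow> real \<Rightarrow> 'a \<Rightarrow> 'a" where
  "PhiR J D Om R = (\<lambda>x. R *\<^sub>R psqrt J (sq_inv D Om R) x)"

end

theory Submission
  imports Defs "HOL-Computational_Algebra.Formal_Power_Series"
begin

lemma parallelogram:
  fixes a b :: "'a::real_inner"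
  shows "norm (a + b)^2 + norm (a - b)^2 = 2 * norm a^2 + 2 * norm b^2"
  by (simp add: power2_norm_eq_inner inner_add inner_diff inner_commute algebra_simps)

lemma inner_eq_all_imp_eq:
  fixes z1 z2 :: "'a::real_inner"
  assumes "\<And>x. inner x z1 = inner x z2" shows "z1 = z2"
proof -
  have "inner (z1 - z2) (z1 - z2) = 0" using assms[of "z1 - z2"] by (simp add: inner_diff_right)
  thus ?thesis by simp
qed

lemma norm_diff_scale_sq:
  fixes a m :: "'a::real_inner"
  shows "norm (a - t *\<^sub>R m)^2 = norm a^2 - 2 * t * inner a m + t^2 * inner m m"
proof -
  have "norm (a - t *\<^sub>R m)^2 = inner (a - t *\<^sub>R m) (a - t *\<^sub>R m)" by (simp add: power2_norm_eq_inner)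
  also have "\<dots> = inner a a - 2 * t * inner a m + t^2 * inner m m"
    by (simp add: inner_diff inner_commute power2_eq_square algebra_simps)
  finally show ?thesis by (simp add: power2_norm_eq_inner)
qed

lemma closest_exists:
  fixes M :: "'a::{real_inner,complete_space} set"
  assumes cl: "closed M" and cv: "convex M" and ne: "M \<noteq> {}"
  shows "\<exists>p\<in>M. \<forall>q\<in>M. norm (x - p)^2 \<le> norm (x - q)^2"
proof -
  define S where "S = (\<lambda>q. norm (x - q)^2) ` M"
  define d where "d = Inf S"
  have Sne: "S \<noteq> {}" using ne by (simp add: S_def)
  have Sbdd: "bdd_below S" unfolding S_def by (rule bdd_belowI[of _ 0]) auto
  have dle: "d \<le> norm (x - q)^2" if "q \<in> M" for q
    unfolding d_def using that Sbdd by (auto simp: S_def intro!: cInf_lower)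
  have "\<exists>q. q \<in> M \<and> norm (x - q)^2 < d + 1 / real (Suc n)" for n
  proof -
    have "Inf S < d + 1 / real (Suc n)" by (simp add: d_def)
    then obtain s where "s \<in> S" "s < d + 1 / real (Suc n)"
      using cInf_less_iff[OF Sne Sbdd] by blast
    thus ?thesis by (auto simp: S_def)
  qed
  then obtain q where qM: "\<And>n. q n \<in> M" and qd: "\<And>n. norm (x - q n)^2 < d + 1 / real (Suc n)"
    by metis
  have key: "norm (q n - q m)^2 \<le> 2 / real (Suc n) + 2 / real (Suc m)" for n m
  proof -
    have mid: "(1/2) *\<^sub>R q n + (1/2) *\<^sub>R q m \<in> M"
      using cv qM unfolding convex_def by auto
    have "norm ((x - q n) + (x - q m)) = norm (2 *\<^sub>R (x - ((1/2) *\<^sub>R q n + (1/2) *\<^sub>R q m)))"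
      by (rule arg_cong[where f=norm]) (simp add: algebra_simps scaleR_2)
    also have "\<dots> = 2 * norm (x - ((1/2) *\<^sub>R q n + (1/2) *\<^sub>R q m))" by simp
    finally have "norm ((x - q n) + (x - q m))^2 = 4 * norm (x - ((1/2) *\<^sub>R q n + (1/2) *\<^sub>R q m))^2"
      by (simp add: power_mult_distrib)
    hence a: "norm ((x - q n) + (x - q m))^2 \<ge> 4 * d" using dle[OF mid] by simp
    have "norm ((x - q n) - (x - q m)) = norm (q n - q m)"
      by (simp add: norm_minus_commute)
    hence "norm (q n - q m)^2 = 2 * norm (x - q n)^2 + 2 * norm (x - q m)^2 - norm ((x - q n) + (x - q m))^2"
      using parallelogram[of "x - q n" "x - q m"] by simp
    thus ?thesis using a qd[of n] qd[of m] by simp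
  qed
  have "Cauchy q"
  proof (rule metric_CauchyI)
    fix e :: real assume e: "0 < e"
    obtain N where N: "4 / e^2 < real N" using reals_Archimedean2 by blast
    have Np: "0 < real N" using N e by (smt (verit) divide_pos_pos zero_less_power)
    show "\<exists>M. \<forall>m\<ge>M. \<forall>n\<ge>M. dist (q m) (q n) < e"
    proof (intro exI allI impI)
      fix m n assume mN: "N \<le> m" and nN: "N \<le> n"
      have h1: "2 / real (Suc n) \<le> 2 / real N" using nN Np by (simp add: frac_le)
      have h2: "2 / real (Suc m) \<le> 2 / real N" using mN Np by (simp add: frac_le)
      have "4 / real N < e^2" using N e Np by (simp add: field_simps)
      hence "dist (q m) (q n)^2 < e^2" using key[of m n] h1 h2 by (simp add: dist_norm)
      thus "dist (q m) (q n) < e" using e by (simp add: power_less_imp_less_base)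
    qed
  qed
  then obtain p where lim: "q \<longlonglongrightarrow> p" using Cauchy_convergent_iff convergent_def by blast
  have pM: "p \<in> M" using cl qM lim closed_sequentially by blast
  have "norm (x - p)^2 \<le> norm (x - r)^2" if rM: "r \<in> M" for r
  proof -
    have l1: "(\<lambda>n. norm (x - q n)^2) \<longlonglongrightarrow> norm (x - p)^2"
      by (intro tendsto_intros lim)
    have l2: "(\<lambda>n. norm (x - r)^2 + 1 / real (Suc n)) \<longlonglongrightarrow> norm (x - r)^2 + 0"
      by (intro tendsto_intros LIMSEQ_inverse_real_of_nat[unfolded inverse_eq_divide])
    have "norm (x - q n)^2 \<le> norm (x - r)^2 + 1 / real (Suc n)" for n
      using qd[of n] dle[OF rM] by linarith
    hence "\<exists>N. \<forall>n\<ge>N. norm (x - q n)^2 \<le> norm (x - r)^2 + 1 / real (Suc n)" by blast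
    from LIMSEQ_le[OF l1 l2 this] show ?thesis by simp
  qed
  thus ?thesis using pM by blast
qed

lemma proj_orth:
  fixes M :: "'a::{real_inner,complete_space} set"
  assumes cl: "closed M" and sub: "subspace M"
  shows "\<exists>p\<in>M. \<forall>m\<in>M. inner (x - p) m = 0"
proof -
  have cv: "convex M" using sub by (simp add: subspace_imp_convex)
  have ne: "M \<noteq> {}" using sub subspace_0 by blast
  obtain p where pM: "p \<in> M" and pmin: "\<And>q. q \<in> M \<Longrightarrow> norm (x - p)^2 \<le> norm (x - q)^2"
    using closest_exists[OF cl cv ne] by blast
  have "inner (x - p) m = 0" if mM: "m \<in> M" for m
  proof (rule ccontr)
    define c where "c = inner (x - p) m"
    define t where "t = c / (inner m m + 1)"
    assume "inner (x - p) m \<noteq> 0"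
    hence c0: "c \<noteq> 0" by (simp add: c_def)
    have "p + t *\<^sub>R m \<in> M" using sub pM mM by (simp add: subspace_add subspace_scale)
    moreover have "x - (p + t *\<^sub>R m) = (x - p) - t *\<^sub>R m" by simp
    ultimately have "norm (x - p)^2 \<le> norm ((x - p) - t *\<^sub>R m)^2" using pmin[of "p + t *\<^sub>R m"] by metis
    also have "\<dots> = norm (x - p)^2 - 2 * t * c + t^2 * inner m m"
      unfolding c_def by (rule norm_diff_scale_sq)
    finally have "0 \<le> t * (t * inner m m - 2 * c)" by (simp add: power2_eq_square algebra_simps)
    moreover have "t * (t * inner m m - 2 * c) = c^2 * (inner m m - 2 * (inner m m + 1)) / (inner m m + 1)^2"
    proof -
      have "inner m m + 1 \<noteq> 0" using inner_ge_zero[of m] by linarith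
      moreover have "1 + inner m m \<noteq> 0" using inner_ge_zero[of m] by linarith
      ultimately show ?thesis by (simp add: t_def field_simps power2_eq_square)
    qed
    moreover have "c^2 * (inner m m - 2 * (inner m m + 1)) / (inner m m + 1)^2 < 0"
    proof -
      have "inner m m + 1 > 0" using inner_ge_zero[of m] by linarith
      moreover have "inner m m - 2 * (inner m m + 1) < 0" using inner_ge_zero[of m] by (smt (verit))
      moreover have "c^2 > 0" using c0 by simp
      ultimately show ?thesis by (intro divide_neg_pos mult_pos_neg) auto
    qed
    ultimately show False by linarith
  qed
  thus ?thesis using pM by blast
qed

lemma orth_complete:
  fixes M :: "'a::{real_inner,complete_space} set"
  assumes cl: "closed M" and sub: "subspace M"
    and orth: "\<And>z. (\<forall>m\<in>M. inner z m = 0) \<Longrightarrow> z = 0"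
  shows "M = UNIV"
proof -
  have "x \<in> M" for x
  proof -
    obtain p where "p \<in> M" "\<forall>m\<in>M. inner (x - p) m = 0" using proj_orth[OF cl sub] by blast
    thus ?thesis using orth[of "x - p"] by simp
  qed
  thus ?thesis by auto
qed

lemma riesz:
  fixes f :: "'a::{real_inner,complete_space} \<Rightarrow> real"
  assumes bl: "bounded_linear f"
  shows "\<exists>z. \<forall>x. f x = inner x z"
proof (cases "\<forall>x. f x = 0")
  case True thus ?thesis by (intro exI[of _ 0]) auto
next
  case False
  then obtain x0 where fx0: "f x0 \<noteq> 0" by blast
  interpret f: bounded_linear f by fact
  define N where "N = {x. f x = 0}"
  have clN: "closed N" unfolding N_def
    by (intro closed_Collect_eq continuous_intros f.continuous_on continuous_on_id)
  have subN: "subspace N" unfolding N_def subspace_def by (auto simp: f.add f.scale f.zero)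
  obtain p where pN: "p \<in> N" and po: "\<forall>m\<in>N. inner (x0 - p) m = 0" using proj_orth[OF clN subN] by blast
  define e where "e = x0 - p"
  have fe: "f e = f x0" using pN by (simp add: e_def N_def f.diff)
  have e0: "e \<noteq> 0" using fe fx0 by auto
  have "f y = inner y ((f e / inner e e) *\<^sub>R e)" for y
  proof -
    have "y - (f y / f e) *\<^sub>R e \<in> N" using fe fx0 by (simp add: N_def f.diff f.scale)
    moreover have poe: "\<forall>m\<in>N. inner e m = 0" using po by (simp add: e_def)
    ultimately have "inner e (y - (f y / f e) *\<^sub>R e) = 0" by blast
    hence "inner (y - (f y / f e) *\<^sub>R e) e = 0" by (simp add: inner_commute)
    hence "inner y e = f y / f e * inner e e" by (simp add: inner_diff_left)
    thus ?thesis using e0 fe fx0 by (simp add: field_simps)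
  qed
  thus ?thesis by blast
qed

definition radj :: "('b::real_inner \<Rightarrow> 'a::real_inner) \<Rightarrow> ('a \<Rightarrow> 'b) \<Rightarrow> bool" where
  "radj B B' \<longleftrightarrow> (\<forall>x y. inner (B x) y = inner x (B' y))"

lemma radj_unique: "radj B B1 \<Longrightarrow> radj B B2 \<Longrightarrow> B1 = B2"
  unfolding radj_def by (metis ext inner_eq_all_imp_eq)

lemma adj_exists:
  fixes B :: "'b::{real_inner,complete_space} \<Rightarrow> 'a::{real_inner,complete_space}"
  assumes bl: "bounded_linear B"
  shows "\<exists>B'. radj B B' \<and> bounded_linear B'"
proof -
  interpret B: bounded_linear B by fact
  have "\<exists>z. \<forall>x. inner (B x) y = inner x z" for y
    by (rule riesz) (intro bounded_linear_compose[OF bounded_linear_inner_left bl])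
  then obtain B' where B': "\<And>x y. inner (B x) y = inner x (B' y)" by metis
  obtain K where K: "\<And>x. norm (B x) \<le> norm x * K" "K > 0" using B.pos_bounded by blast
  have "bounded_linear B'"
  proof (rule bounded_linear_intro[where K=K])
    fix y1 y2 show "B' (y1 + y2) = B' y1 + B' y2"
      by (rule inner_eq_all_imp_eq) (simp add: inner_add_right B'[symmetric])
  next
    fix r y show "B' (r *\<^sub>R y) = r *\<^sub>R B' y"
      by (rule inner_eq_all_imp_eq) (simp add: B'[symmetric])
  next
    fix y
    have "norm (B' y)^2 = inner (B (B' y)) y" using B'[of "B' y" y] by (simp add: power2_norm_eq_inner)
    also have "\<dots> \<le> norm (B (B' y)) * norm y" by (rule norm_cauchy_schwarz)
    also have "\<dots> \<le> norm (B' y) * K * norm y" using K by (simp add: mult_right_mono)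
    finally have "norm (B' y) * norm (B' y) \<le> norm (B' y) * (K * norm y)" by (simp add: power2_eq_square algebra_simps)
    thus "norm (B' y) \<le> norm y * K" using K(2)
      by (cases "norm (B' y) = 0") (auto simp: algebra_simps)
  qed
  thus ?thesis using B' by (auto simp: radj_def)
qed

locale cs =
  fixes J :: "'a::{real_inner,complete_space} \<Rightarrow> 'a"
  assumes cs: "cstruct J"
begin

lemma lin: "linear J" using cs by (simp add: cstruct_def)
lemma JJ[simp]: "J (J x) = - x" using cs by (simp add: cstruct_def)
lemma inner_JJ[simp]: "inner (J x) (J y) = inner x y" using cs by (simp add: cstruct_def)
lemma add[simp]: "J (x + y) = J x + J y" using lin by (simp add: linear_add)
lemma scale[simp]: "J (r *\<^sub>R x) = r *\<^sub>R J x" using lin by (simp add: linear_scale)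
lemma zero[simp]: "J 0 = 0" using lin by (simp add: linear_0)
lemma minus[simp]: "J (- x) = - J x" using lin by (simp add: linear_neg)
lemma diff[simp]: "J (x - y) = J x - J y" using lin by (simp add: linear_diff)
lemma sum: "J (sum f A) = sum (\<lambda>i. J (f i)) A" using lin by (simp add: linear_sum)
lemma inner_J_left: "inner (J x) y = - inner x (J y)"
  using inner_JJ[of x "J y"] by simp
lemma inner_J_self[simp]: "inner (J x) x = 0"
  using inner_J_left[of x x] by (simp add: inner_commute)
lemma inner_J_self'[simp]: "inner x (J x) = 0"
  using inner_J_self[of x] by (simp add: inner_commute)
lemma norm_J[simp]: "norm (J x) = norm x"
  by (simp add: norm_eq_sqrt_inner)
lemma bl: "bounded_linear J"
  using lin by (intro bounded_linear_intro[where K=1]) (auto simp: linear_add linear_scale)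
lemma tendsto[tendsto_intros]: "(f \<longlongrightarrow> l) F \<Longrightarrow> ((\<lambda>x. J (f x)) \<longlongrightarrow> J l) F"
  using bounded_linear.tendsto[OF bl] .
lemma inj: "J x = J y \<longleftrightarrow> x = y"
  by (metis JJ minus_equation_iff)

lemma cinner_eq_iff: "cinner J x y = cinner J a b \<longleftrightarrow> inner x y = inner a b \<and> inner (J x) y = inner (J a) b"
  by (simp add: cinner_def complex_eq_iff)

lemma cinner_J_right: "cinner J x (J y) = \<i> * cinner J x y"
  by (simp add: cinner_def complex_eq_iff inner_J_left)

lemma csc_i: "csc J \<i> x = J x" by (simp add: csc_def)
lemma csc_real: "csc J (complex_of_real r) x = r *\<^sub>R x" by (simp add: csc_def)

end

lemma radj_J:
  assumes "cs J1" "cs J0" "bounded_linear B" "\<And>x. B (J1 x) = J0 (B x)" "radj B B'"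
  shows "B' (J0 y) = J1 (B' y)"
proof (rule inner_eq_all_imp_eq)
  interpret J0: cs J0 by fact
  interpret J1: cs J1 by fact
  fix x
  have "inner x (B' (J0 y)) = inner (B x) (J0 y)" using assms(5) by (simp add: radj_def)
  also have "\<dots> = - inner (J0 (B x)) y" by (simp add: J0.inner_J_left)
  also have "\<dots> = - inner (B (J1 x)) y" by (simp add: assms(4))
  also have "\<dots> = - inner (J1 x) (B' y)" using assms(5) by (simp add: radj_def)
  also have "\<dots> = inner x (J1 (B' y))" by (simp add: J1.inner_J_left)
  finally show "inner x (B' (J0 y)) = inner x (J1 (B' y))" .
qed

lemma badj_eq:
  assumes "cs J1" "cs J0" "bounded_linear B" "\<And>x. B (J1 x) = J0 (B x)" "radj B B'"
  shows "badj J0 J1 B y = B' y"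
proof -
  interpret J0: cs J0 by fact
  interpret J1: cs J1 by fact
  have P: "\<forall>x. cinner J0 (B x) y = cinner J1 x (B' y)"
  proof
    fix x
    have "inner (B x) y = inner x (B' y)" using assms(5) by (simp add: radj_def)
    moreover have "inner (J0 (B x)) y = inner (J1 x) (B' y)"
      using assms(5) unfolding radj_def assms(4)[symmetric] by blast
    ultimately show "cinner J0 (B x) y = cinner J1 x (B' y)" by (simp add: cinner_def)
  qed
  show ?thesis unfolding badj_def
  proof (rule the_equality)
    show "\<forall>x. cinner J0 (B x) y = cinner J1 x (B' y)" by fact
  next
    fix z assume "\<forall>x. cinner J0 (B x) y = cinner J1 x z"
    hence "inner x z = inner x (B' y)" for x using P[rule_format, of x]
      by (simp add: cinner_def complex_eq_iff)
    thus "z = B' y" by (rule inner_eq_all_imp_eq)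
  qed
qed

locale sa = cs J for J :: "'a::{real_inner,complete_space} \<Rightarrow> 'a" +
  fixes D :: "'a set" and T :: "'a \<Rightarrow> 'a"
  assumes sa: "self_adjoint J D T"
begin

lemma dense: "closure D = UNIV" using sa by (simp add: self_adjoint_def)

lemma adj_iff: "(y \<in> D \<and> z = T y) \<longleftrightarrow> (\<forall>x\<in>D. cinner J (T x) y = cinner J x z)"
proof -
  have "(y, z) \<in> {(y, z). \<forall>x\<in>D. cinner J (T x) y = cinner J x z} \<longleftrightarrow> (y, z) \<in> {(x, T x) | x. x \<in> D}"
    using sa by (simp add: self_adjoint_def)
  thus ?thesis by auto
qed

lemma cinner_add_right: "cinner J x (a + b) = cinner J x a + cinner J x b"
  by (simp add: cinner_def complex_eq_iff inner_add_right)
lemma cinner_scale_right: "cinner J x (r *\<^sub>R a) = r * cinner J x a"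
  by (simp add: cinner_def complex_eq_iff)
lemma cinner_minus_right: "cinner J x (- a) = - cinner J x a"
  by (simp add: cinner_def complex_eq_iff)

lemma D_add: "x \<in> D \<Longrightarrow> y \<in> D \<Longrightarrow> x + y \<in> D \<and> T (x + y) = T x + T y"
  using adj_iff[of x "T x"] adj_iff[of y "T y"] adj_iff[of "x + y" "T x + T y"]
  by (simp add: cinner_add_right)

lemma D_scale: "x \<in> D \<Longrightarrow> r *\<^sub>R x \<in> D \<and> T (r *\<^sub>R x) = r *\<^sub>R T x"
  using adj_iff[of x "T x"] adj_iff[of "r *\<^sub>R x" "r *\<^sub>R T x"]
  by (simp add: cinner_scale_right)

lemma D_J: "x \<in> D \<Longrightarrow> J x \<in> D \<and> T (J x) = J (T x)"
  using adj_iff[of x "T x"] adj_iff[of "J x" "J (T x)"]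
  by (simp add: cinner_J_right)

lemma D_0: "0 \<in> D" "T 0 = 0"
  using adj_iff[of 0 0] by (auto simp: cinner_def zero_complex_def)

lemma D_minus: "x \<in> D \<Longrightarrow> - x \<in> D \<and> T (- x) = - T x"
  using D_scale[of x "-1"] by simp

lemma D_diff: "x \<in> D \<Longrightarrow> y \<in> D \<Longrightarrow> x - y \<in> D \<and> T (x - y) = T x - T y"
  using D_add[of x "- y"] D_minus[of y] by simp

lemma T_diff: "x \<in> D \<Longrightarrow> y \<in> D \<Longrightarrow> T (x - y) = T x - T y" using D_diff by blast
lemma mem_diff: "x \<in> D \<Longrightarrow> y \<in> D \<Longrightarrow> x - y \<in> D" using D_diff by blast
lemma T_add: "x \<in> D \<Longrightarrow> y \<in> D \<Longrightarrow> T (x + y) = T x + T y" using D_add by blast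
lemma mem_add: "x \<in> D \<Longrightarrow> y \<in> D \<Longrightarrow> x + y \<in> D" using D_add by blast
lemma T_scale: "x \<in> D \<Longrightarrow> T (r *\<^sub>R x) = r *\<^sub>R T x" using D_scale by blast
lemma mem_scale: "x \<in> D \<Longrightarrow> r *\<^sub>R x \<in> D" using D_scale by blast
lemma T_J: "x \<in> D \<Longrightarrow> T (J x) = J (T x)" using D_J by blast
lemma mem_J: "x \<in> D \<Longrightarrow> J x \<in> D" using D_J by blast

lemma subspace_D: "subspace D"
  unfolding subspace_def using D_0 D_add D_scale by blast

lemma sym: "x \<in> D \<Longrightarrow> y \<in> D \<Longrightarrow> inner (T x) y = inner x (T y)"
  using adj_iff[of y "T y"] by (simp add: cinner_eq_iff)

lemma radj_iff: "(y \<in> D \<and> z = T y) \<longleftrightarrow> (\<forall>x\<in>D. inner (T x) y = inner x z)"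
proof
  assume "y \<in> D \<and> z = T y" thus "\<forall>x\<in>D. inner (T x) y = inner x z" using sym by auto
next
  assume h: "\<forall>x\<in>D. inner (T x) y = inner x z"
  have "\<forall>x\<in>D. cinner J (T x) y = cinner J x z"
  proof
    fix x assume x: "x \<in> D"
    have "inner (J (T x)) y = inner (J x) z" using h D_J[OF x] by metis
    thus "cinner J (T x) y = cinner J x z" using h x by (simp add: cinner_eq_iff)
  qed
  thus "y \<in> D \<and> z = T y" using adj_iff by blast
qed

lemma closed_graph:
  assumes "\<And>n. xs n \<in> D" "xs \<longlonglongrightarrow> x" "(\<lambda>n. T (xs n)) \<longlonglongrightarrow> z"
  shows "x \<in> D \<and> T x = z"
proof -
  have "inner (T x') x = inner x' z" if x': "x' \<in> D" for x'
  proof -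
    have "(\<lambda>n. inner (T x') (xs n)) \<longlonglongrightarrow> inner (T x') x" by (intro tendsto_intros assms)
    moreover have "(\<lambda>n. inner (T x') (xs n)) = (\<lambda>n. inner x' (T (xs n)))" using sym x' assms(1) by auto
    moreover have "(\<lambda>n. inner x' (T (xs n))) \<longlonglongrightarrow> inner x' z" by (intro tendsto_intros assms)
    ultimately show ?thesis using LIMSEQ_unique by metis
  qed
  thus ?thesis using radj_iff by metis
qed

lemma inner_T_J: "x \<in> D \<Longrightarrow> inner (T x) (J x) = 0"
proof -
  assume x: "x \<in> D"
  have "inner (T x) (J x) = inner x (T (J x))" using sym x D_J by blast
  also have "\<dots> = inner x (J (T x))" using D_J x by simp
  also have "\<dots> = - inner (T x) (J x)" by (simp add: inner_J_left inner_commute)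
  finally show ?thesis by simp
qed

lemma norm_id: "x \<in> D \<Longrightarrow> norm (T x + s *\<^sub>R J x)^2 = norm (T x)^2 + s^2 * norm x^2"
proof -
  assume x: "x \<in> D"
  have "norm (T x + s *\<^sub>R J x)^2 = inner (T x + s *\<^sub>R J x) (T x + s *\<^sub>R J x)" by (simp add: power2_norm_eq_inner)
  also have "\<dots> = inner (T x) (T x) + 2 * s * inner (T x) (J x) + s^2 * inner (J x) (J x)"
    by (simp add: inner_add inner_commute power2_eq_square algebra_simps)
  also have "\<dots> = norm (T x)^2 + s^2 * norm x^2" using inner_T_J[OF x] by (simp add: power2_norm_eq_inner)
  finally show ?thesis .
qed

lemma lower: "x \<in> D \<Longrightarrow> \<bar>s\<bar> * norm x \<le> norm (T x + s *\<^sub>R J x)"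
proof -
  assume x: "x \<in> D"
  have "(\<bar>s\<bar> * norm x)^2 \<le> norm (T x + s *\<^sub>R J x)^2" using norm_id[OF x, of s] by (simp add: power_mult_distrib)
  thus ?thesis by (rule power2_le_imp_le) simp
qed

lemma lowerT: "x \<in> D \<Longrightarrow> norm (T x) \<le> norm (T x + s *\<^sub>R J x)"
proof -
  assume x: "x \<in> D"
  have "(norm (T x))^2 \<le> norm (T x + s *\<^sub>R J x)^2" using norm_id[OF x, of s] by simp
  thus ?thesis by (rule power2_le_imp_le) simp
qed

lemma surj:
  assumes s: "s \<noteq> 0"
  shows "\<exists>x\<in>D. T x + s *\<^sub>R J x = y"
proof -
  define f where "f = (\<lambda>x. T x + s *\<^sub>R J x)"
  define M where "M = f ` D"
  have fadd: "f (x + y) = f x + f y" if "x \<in> D" "y \<in> D" for x y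
    using D_add[OF that] by (simp add: f_def scaleR_add_right)
  have fscale: "f (c *\<^sub>R x) = c *\<^sub>R f x" if "x \<in> D" for x c
    using D_scale[OF that] by (simp add: f_def scaleR_add_right)
  have subM: "subspace M"
    unfolding subspace_def M_def
  proof (intro conjI ballI allI)
    have "f 0 = 0" using D_0 by (simp add: f_def)
    thus "0 \<in> f ` D" using D_0 by (metis imageI)
  next
    fix a b assume "a \<in> f ` D" "b \<in> f ` D"
    then obtain x y where xy: "x \<in> D" "y \<in> D" "a = f x" "b = f y" by blast
    hence "a + b = f (x + y)" using fadd by simp
    moreover have "x + y \<in> D" using D_add xy by blast
    ultimately show "a + b \<in> f ` D" by blast
  next
    fix c a assume "a \<in> f ` D"
    then obtain x where x: "x \<in> D" "a = f x" by blast
    hence "c *\<^sub>R a = f (c *\<^sub>R x)" using fscale by simp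
    moreover have "c *\<^sub>R x \<in> D" using D_scale x by blast
    ultimately show "c *\<^sub>R a \<in> f ` D" by blast
  qed
  have clM: "closed M"
  proof (rule closed_sequential_limits[THEN iffD2], intro allI impI, elim conjE)
    fix ys l assume ysM: "\<forall>n. ys n \<in> M" and lim: "ys \<longlonglongrightarrow> l"
    have "\<forall>n. \<exists>x. x \<in> D \<and> ys n = T x + s *\<^sub>R J x" using ysM unfolding M_def f_def by blast
    hence "\<exists>xs. \<forall>n. xs n \<in> D \<and> ys n = T (xs n) + s *\<^sub>R J (xs n)" by (rule choice)
    then obtain xs where xsD: "\<And>n. xs n \<in> D" and xs: "\<And>n. ys n = T (xs n) + s *\<^sub>R J (xs n)"
      by blast
    have C: "Cauchy ys" using lim by (rule LIMSEQ_imp_Cauchy)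
    have dif: "ys m - ys n = T (xs m - xs n) + s *\<^sub>R J (xs m - xs n)" for m n
    proof -
      have d: "T (xs m - xs n) = T (xs m) - T (xs n)" using T_diff[OF xsD xsD] .
      show ?thesis unfolding d xs by (simp add: scaleR_diff_right algebra_simps)
    qed
    have "Cauchy xs"
    proof (rule metric_CauchyI)
      fix e :: real assume e: "e > 0"
      have es: "e * \<bar>s\<bar> > 0" using e s by simp
      obtain N where N: "\<forall>m\<ge>N. \<forall>n\<ge>N. dist (ys m) (ys n) < e * \<bar>s\<bar>"
        using metric_CauchyD[OF C es] by blast
      show "\<exists>N. \<forall>m\<ge>N. \<forall>n\<ge>N. dist (xs m) (xs n) < e"
      proof (intro exI allI impI)
        fix m n assume "N \<le> m" "N \<le> n"
        hence "norm (ys m - ys n) < e * \<bar>s\<bar>" using N by (simp add: dist_norm)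
        moreover have "\<bar>s\<bar> * norm (xs m - xs n) \<le> norm (ys m - ys n)"
          using lower[OF mem_diff[OF xsD[of m] xsD[of n]], of s] unfolding dif[of m n] .
        ultimately have "\<bar>s\<bar> * norm (xs m - xs n) < \<bar>s\<bar> * e" by (simp add: mult.commute)
        hence "norm (xs m - xs n) < e" using s by (simp add: mult_less_cancel_left_pos)
        thus "dist (xs m) (xs n) < e" by (simp add: dist_norm)
      qed
    qed
    then obtain x where x: "xs \<longlonglongrightarrow> x" using Cauchy_convergent_iff convergent_def by blast
    have "Cauchy (\<lambda>n. T (xs n))"
    proof (rule metric_CauchyI)
      fix e :: real assume e: "e > 0"
      obtain N where N: "\<forall>m\<ge>N. \<forall>n\<ge>N. dist (ys m) (ys n) < e"
        using metric_CauchyD[OF C e] by blast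
      show "\<exists>N. \<forall>m\<ge>N. \<forall>n\<ge>N. dist (T (xs m)) (T (xs n)) < e"
      proof (intro exI allI impI)
        fix m n assume "N \<le> m" "N \<le> n"
        hence "norm (ys m - ys n) < e" using N by (simp add: dist_norm)
        moreover have "norm (T (xs m - xs n)) \<le> norm (ys m - ys n)"
          using lowerT[OF mem_diff[OF xsD[of m] xsD[of n]], of s] unfolding dif[of m n] .
        ultimately have "norm (T (xs m - xs n)) < e" by simp
        thus "dist (T (xs m)) (T (xs n)) < e" unfolding dist_norm T_diff[OF xsD xsD] .
      qed
    qed
    then obtain z where z: "(\<lambda>n. T (xs n)) \<longlonglongrightarrow> z" using Cauchy_convergent_iff convergent_def by blast
    have xz: "x \<in> D \<and> T x = z" using closed_graph[OF xsD x z] .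
    have "(\<lambda>n. T (xs n) + s *\<^sub>R J (xs n)) \<longlonglongrightarrow> z + s *\<^sub>R J x"
      by (intro tendsto_intros x z)
    hence "(\<lambda>n. T (xs n) + s *\<^sub>R J (xs n)) \<longlonglongrightarrow> T x + s *\<^sub>R J x" using xz by simp
    moreover have "(\<lambda>n. T (xs n) + s *\<^sub>R J (xs n)) = ys" using xs by auto
    ultimately have "ys \<longlonglongrightarrow> T x + s *\<^sub>R J x" by simp
    hence "l = T x + s *\<^sub>R J x" using lim LIMSEQ_unique by blast
    thus "l \<in> M" using xz unfolding M_def f_def by blast
  qed
  have "M = UNIV"
  proof (rule orth_complete[OF clM subM])
    fix z assume orth: "\<forall>m\<in>M. inner z m = 0"
    have "inner (T x) z = inner x (s *\<^sub>R J z)" if x: "x \<in> D" for x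
    proof -
      have "f x \<in> M" unfolding M_def using x by (rule imageI)
      hence "inner z (f x) = 0" using orth by blast
      hence "inner z (T x + s *\<^sub>R J x) = 0" by (simp add: f_def)
      moreover have "inner z (J x) = - inner x (J z)" using inner_J_left[of x z] by (simp add: inner_commute)
      ultimately show ?thesis by (simp add: inner_add_right inner_commute)
    qed
    hence "z \<in> D \<and> s *\<^sub>R J z = T z" by (intro radj_iff[THEN iffD2] ballI)
    hence zD: "z \<in> D" and Tz: "T z = s *\<^sub>R J z" by auto
    have "norm (T z + (- s) *\<^sub>R J z)^2 = 0" using Tz by simp
    hence "norm (T z)^2 + s^2 * norm z^2 = 0" using norm_id[OF zD, of "- s"] by simp
    hence "s^2 * norm z^2 = 0" by (simp add: add_nonneg_eq_0_iff)
    thus "z = 0" using s by simp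
  qed
  hence "y \<in> M" by simp
  thus ?thesis unfolding M_def f_def by blast
qed

lemma uniq: "x \<in> D \<Longrightarrow> x' \<in> D \<Longrightarrow> s \<noteq> 0 \<Longrightarrow> T x + s *\<^sub>R J x = T x' + s *\<^sub>R J x' \<Longrightarrow> x = x'"
proof -
  assume x: "x \<in> D" and x': "x' \<in> D" and s: "s \<noteq> 0" and e: "T x + s *\<^sub>R J x = T x' + s *\<^sub>R J x'"
  have d: "T (x - x') = T x - T x'" using D_diff[OF x x'] by blast
  have "T (x - x') + s *\<^sub>R J (x - x') = (T x + s *\<^sub>R J x) - (T x' + s *\<^sub>R J x')"
    unfolding d by (simp add: scaleR_diff_right algebra_simps)
  hence "T (x - x') + s *\<^sub>R J (x - x') = 0" using e by simp
  hence "\<bar>s\<bar> * norm (x - x') \<le> 0" using lower[of "x - x'" s] D_diff[OF x x'] by simp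
  thus "x = x'" using s by (simp add: mult_le_0_iff)
qed

definition "res s y = resolv J D T s y"

lemma res: assumes "s \<noteq> 0" shows "res s y \<in> D" "T (res s y) + s *\<^sub>R J (res s y) = y"
proof -
  obtain x where x: "x \<in> D" "T x + s *\<^sub>R J x = y" using surj[OF assms] by blast
  have "res s y = x" unfolding res_def resolv_def
    by (rule the_equality) (use x uniq assms in auto)
  thus "res s y \<in> D" "T (res s y) + s *\<^sub>R J (res s y) = y" using x by auto
qed

lemma res_eq: "s \<noteq> 0 \<Longrightarrow> x \<in> D \<Longrightarrow> T x + s *\<^sub>R J x = y \<Longrightarrow> res s y = x"
  using res uniq by blast

lemma res_bl: assumes s: "s \<noteq> 0" shows "bounded_linear (res s)"
proof (rule bounded_linear_intro[where K="1 / \<bar>s\<bar>"])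
  fix a b show "res s (a + b) = res s a + res s b"
    using res[OF s, of a] res[OF s, of b] D_add[of "res s a" "res s b"]
    by (intro res_eq[OF s]) (auto simp: algebra_simps)
next
  fix r a
  have "T (r *\<^sub>R res s a) + s *\<^sub>R J (r *\<^sub>R res s a) = r *\<^sub>R (T (res s a) + s *\<^sub>R J (res s a))"
    using D_scale[OF res(1)[OF s], of r] by (simp add: scaleR_add_right)
  also have "\<dots> = r *\<^sub>R a" using res(2)[OF s] by simp
  finally show "res s (r *\<^sub>R a) = r *\<^sub>R res s a"
    using D_scale[OF res(1)[OF s], of r] by (intro res_eq[OF s]) auto
next
  fix a
  have "\<bar>s\<bar> * norm (res s a) \<le> norm a" using lower[OF res(1)[OF s], of s] res(2)[OF s] by simp
  thus "norm (res s a) \<le> norm a * (1 / \<bar>s\<bar>)" using s by (simp add: field_simps)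
qed

lemma res_J: assumes s: "s \<noteq> 0" shows "res s (J y) = J (res s y)"
proof -
  have "T (J (res s y)) + s *\<^sub>R J (J (res s y)) = J (T (res s y) + s *\<^sub>R J (res s y))"
    using D_J[OF res(1)[OF s]] by simp
  also have "\<dots> = J y" using res(2)[OF s] by simp
  finally show ?thesis using D_J[OF res(1)[OF s]] by (intro res_eq[OF s]) auto
qed

lemma T_res_bound: assumes s: "s \<noteq> 0" shows "norm (T (res s y)) \<le> norm y"
  using lowerT[OF res(1)[OF s, of y], of s] res(2)[OF s, of y] by simp

lemma res_adj: assumes s: "s \<noteq> 0" shows "inner (res s x) y = inner x (res (- s) y)"
proof -
  have s': "- s \<noteq> 0" using s by simp
  define a where "a = res s x"
  define b where "b = res (- s) y"
  have a: "a \<in> D" "x = T a + s *\<^sub>R J a" using res[OF s] by (auto simp: a_def)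
  have b: "b \<in> D" "y = T b - s *\<^sub>R J b" using res[OF s'] by (auto simp: b_def)
  have "inner a y = inner a (T b) - s * inner a (J b)" using b by (simp add: inner_diff_right)
  also have "\<dots> = inner (T a) b + s * inner (J a) b" using sym[OF a(1) b(1)] by (simp add: inner_J_left)
  also have "\<dots> = inner x b" using a by (simp add: inner_add_left)
  finally show ?thesis by (simp add: a_def b_def)
qed

end

section \<open>Absolute convergence in complete normed spaces\<close>

lemma summable_Cauchy_c: "summable f \<longleftrightarrow> (\<forall>e>0. \<exists>N. \<forall>m\<ge>N. \<forall>n. norm (sum f {m..<n}) < e)" (is "_ = ?rhs")
  for f :: "nat \<Rightarrow> 'a::{real_normed_vector,complete_space}"
proof
  assume f: "summable f"
  show ?rhs
  proof clarify
    fix e :: real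
    assume "0 < e"
    then obtain M where M: "\<And>m n. \<lbrakk>m\<ge>M; n\<ge>M\<rbrakk> \<Longrightarrow> norm (sum f {..<m} - sum f {..<n}) < e"
      using f by (force simp add: summable_iff_convergent Cauchy_convergent_iff [symmetric] Cauchy_iff)
    have "norm (sum f {m..<n}) < e" if "m \<ge> M" for m n
    proof (cases m n rule: linorder_class.le_cases)
      assume "m \<le> n"
      then show ?thesis
        by (metis (mono_tags, opaque_lifting) M atLeast0LessThan order_trans sum_diff_nat_ivl that zero_le)
    next
      assume "n \<le> m"
      then show ?thesis
        by (simp add: \<open>0 < e\<close>)
    qed
    then show "\<exists>N. \<forall>m\<ge>N. \<forall>n. norm (sum f {m..<n}) < e"
      by blast
  qed
next
  assume r: ?rhs
  then show "summable f"
    unfolding summable_iff_convergent Cauchy_convergent_iff [symmetric] Cauchy_iff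
  proof clarify
    fix e :: real
    assume "0 < e"
    with r obtain N where N: "\<And>m n. m \<ge> N \<Longrightarrow> norm (sum f {m..<n}) < e"
      by blast
    have "norm (sum f {..<m} - sum f {..<n}) < e" if "m\<ge>N" "n\<ge>N" for m n
    proof (cases m n rule: linorder_class.le_cases)
      assume "m \<le> n"
      then show ?thesis
        by (metis N finite_lessThan lessThan_minus_lessThan lessThan_subset_iff norm_minus_commute sum_diff \<open>m\<ge>N\<close>)
    next
      assume "n \<le> m"
      then show ?thesis
        by (metis N finite_lessThan lessThan_minus_lessThan lessThan_subset_iff sum_diff \<open>n\<ge>N\<close>)
    qed
    then show "\<exists>M. \<forall>m\<ge>M. \<forall>n\<ge>M. norm (sum f {..<m} - sum f {..<n}) < e"
      by blast
  qed
qed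

lemma summable_norm_cancel_c: "summable (\<lambda>n. norm (f n)) \<Longrightarrow> summable f"
  for f :: "nat \<Rightarrow> 'a::{real_normed_vector,complete_space}"
  unfolding summable_Cauchy_c summable_Cauchy
  apply (erule all_forward imp_forward ex_forward | assumption)+
  apply (fastforce simp add: order_le_less_trans [OF norm_sum] order_le_less_trans [OF abs_ge_self])
  done

lemma summable_norm_c: "summable (\<lambda>n. norm (f n)) \<Longrightarrow> norm (suminf f) \<le> (\<Sum>n. norm (f n))"
  for f :: "nat \<Rightarrow> 'a::{real_normed_vector,complete_space}"
proof -
  assume a: "summable (\<lambda>n. norm (f n))"
  have l1: "(\<lambda>n. norm (sum f {..<n})) \<longlonglongrightarrow> norm (suminf f)"
    by (rule tendsto_norm, rule summable_LIMSEQ, rule summable_norm_cancel_c[OF a])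
  have l2: "(\<lambda>n. sum (\<lambda>i. norm (f i)) {..<n}) \<longlonglongrightarrow> (\<Sum>n. norm (f n))"
    by (rule summable_LIMSEQ[OF a])
  have "norm (sum f {..<n}) \<le> sum (\<lambda>i. norm (f i)) {..<n}" for n by (rule norm_sum)
  hence "\<exists>N. \<forall>n\<ge>N. norm (sum f {..<n}) \<le> sum (\<lambda>i. norm (f i)) {..<n}" by blast
  thus ?thesis by (rule LIMSEQ_le[OF l1 l2])
qed

lemma summable_comparison_c:
  fixes f :: "nat \<Rightarrow> 'a::{real_normed_vector,complete_space}"
  assumes "\<And>n. norm (f n) \<le> g n" "summable g"
  shows "summable f"
proof -
  have "summable (\<lambda>n. norm (f n))"
    by (rule summable_comparison_test[OF _ assms(2)]) (use assms(1) in auto)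
  thus ?thesis by (rule summable_norm_cancel_c)
qed

section \<open>Coefficients of the square root series\<close>

fun cc :: "nat \<Rightarrow> real" where
  "cc 0 = 1"
| "cc (Suc n) = cc n * (real n - 1/2) / (real n + 1)"

lemma cc_gbin: "cc n = ((1/2::real) gchoose n) * (-1)^n"
proof (induction n)
  case 0 thus ?case by simp
next
  case (Suc n)
  have "(1/2::real) * ((1/2) gchoose n) = real n * ((1/2) gchoose n) + real (Suc n) * ((1/2) gchoose (Suc n))"
    by (rule gbinomial_mult_1)
  hence h: "(real n + 1) * ((1/2::real) gchoose (Suc n)) = (1/2 - real n) * ((1/2) gchoose n)"
    by (simp add: algebra_simps)
  have "((1/2::real) gchoose (Suc n)) = (1/2 - real n) * ((1/2) gchoose n) / (real n + 1)"
    using h by (simp add: eq_divide_eq mult.commute)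
  hence "((1/2::real) gchoose (Suc n)) * (-1)^(Suc n) = ((1/2) gchoose n) * (-1)^n * (real n - 1/2) / (real n + 1)"
    by (simp add: algebra_simps)
  thus ?case using Suc by simp
qed

lemma cc_conv: "(\<Sum>i\<le>k. cc i * cc (k - i)) = (if k = 0 then 1 else if k = 1 then -1 else 0)"
proof -
  have "(\<Sum>i\<le>k. cc i * cc (k - i)) = (\<Sum>i=0..k. (((1/2::real) gchoose i) * ((1/2) gchoose (k - i))) * (-1)^k)"
    unfolding atMost_atLeast0
  proof (rule sum.cong[OF refl])
    fix i assume "i \<in> {0..k}"
    hence "(-1::real)^i * (-1)^(k-i) = (-1)^k" by (simp add: power_add[symmetric])
    thus "cc i * cc (k - i) = (((1/2::real) gchoose i) * ((1/2) gchoose (k - i))) * (-1)^k"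
      unfolding cc_gbin by (metis (no_types, lifting) mult.assoc mult.left_commute)
  qed
  also have "\<dots> = ((1::real) gchoose k) * (-1)^k"
    using gbinomial_Vandermonde[of "1/2::real" "1/2" k] by (simp add: sum_distrib_right[symmetric])
  also have "\<dots> = (if k = 0 then 1 else if k = 1 then -1 else 0)"
  proof -
    have "((1::real) gchoose k) = real (1 choose k)" using binomial_gbinomial[of 1 k, where 'a=real] by simp
    thus ?thesis by (cases k) (auto simp: binomial_eq_0)
  qed
  finally show ?thesis .
qed

lemma cc_nonpos: "n \<ge> 1 \<Longrightarrow> cc n \<le> 0"
proof (induction n)
  case 0 thus ?case by simp
next
  case (Suc n)
  show ?case
  proof (cases n)
    case 0 thus ?thesis by simp
  next
    case (Suc m)
    hence "cc n \<le> 0" using Suc.IH by simp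
    moreover have "real n - 1/2 \<ge> 0" using Suc by simp
    ultimately show ?thesis by (simp add: divide_nonpos_pos mult_nonpos_nonneg)
  qed
qed

lemma cc_psum: "(\<Sum>i\<le>m. cc i) = - 2 * (real m + 1) * cc (Suc m)"
proof (induction m)
  case 0 thus ?case by simp
next
  case (Suc m)
  have "(\<Sum>i\<le>Suc m. cc i) = - 2 * (real m + 1) * cc (Suc m) + cc (Suc m)" using Suc by (simp del: cc.simps)
  also have "\<dots> = - 2 * (real (Suc m) + 1) * cc (Suc (Suc m))"
    unfolding cc.simps(2)[of "Suc m"] by (simp add: field_simps del: cc.simps)
  finally show ?case .
qed

lemma cc_psum_nonneg: "0 \<le> (\<Sum>i\<le>m. cc i)"
proof -
  have "cc (Suc m) \<le> 0" by (rule cc_nonpos) simp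
  hence "0 \<le> - 2 * (real m + 1) * cc (Suc m)" by (simp add: mult_nonpos_nonpos del: cc.simps)
  thus ?thesis unfolding cc_psum .
qed

lemma cc_psum_nonneg': "0 \<le> (\<Sum>i<m. cc i)"
proof (cases m)
  case 0 thus ?thesis by simp
next
  case (Suc k) thus ?thesis using cc_psum_nonneg[of k] by (simp add: lessThan_Suc_atMost)
qed

lemma abs_cc: "\<bar>cc n\<bar> = (if n = 0 then 1 else - cc n)"
  using cc_nonpos[of n] by auto

lemma abs_cc_psum: "(\<Sum>i\<le>m. \<bar>cc i\<bar>) = 2 - (\<Sum>i\<le>m. cc i)"
proof (induction m)
  case 0 thus ?case by simp
next
  case (Suc m) thus ?case using abs_cc[of "Suc m"] by simp
qed

lemma summable_abs_cc: "summable (\<lambda>n. \<bar>cc n\<bar>)"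
  by (rule bounded_imp_summable[where B=2]) (use abs_cc_psum cc_psum_nonneg in auto)

lemma summable_cc: "summable cc"
  by (rule summable_norm_cancel) (simp add: summable_abs_cc)

lemma suminf_cc_nonneg: "0 \<le> suminf cc"
  using summable_LIMSEQ[OF summable_cc] by (rule LIMSEQ_le_const) (use cc_psum_nonneg' in auto)

definition "Scc = (\<Sum>n. \<bar>cc n\<bar>)"

lemma Scc_ge: "(\<Sum>n<N. \<bar>cc n\<bar>) \<le> Scc"
  unfolding Scc_def using summable_abs_cc by (rule sum_le_suminf) auto

lemma Scc_nonneg: "0 \<le> Scc"
  using Scc_ge[of 0] by simp

definition "tail N = (\<Sum>n. \<bar>cc (n + N)\<bar>)"

lemma tail_eq: "tail N = Scc - (\<Sum>n<N. \<bar>cc n\<bar>)"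
  unfolding tail_def Scc_def using suminf_minus_initial_segment[OF summable_abs_cc] .

lemma tail_lim: "tail \<longlonglongrightarrow> 0"
proof -
  have "(\<lambda>N. Scc - (\<Sum>n<N. \<bar>cc n\<bar>)) \<longlonglongrightarrow> Scc - Scc"
    unfolding Scc_def by (intro tendsto_intros summable_LIMSEQ summable_abs_cc)
  thus ?thesis unfolding tail_eq[abs_def] by simp
qed

lemma tail_nonneg: "0 \<le> tail N"
  unfolding tail_eq using Scc_ge[of N] by simp

lemma cauchy_abs_cc:
  "(\<lambda>N. (\<Sum>k<N. \<Sum>i\<le>k. \<bar>cc i\<bar> * \<bar>cc (k - i)\<bar>)) \<longlonglongrightarrow> Scc * Scc"
proof -
  have "(\<lambda>k. \<Sum>i\<le>k. \<bar>cc i\<bar> * \<bar>cc (k - i)\<bar>) sums ((\<Sum>k. \<bar>cc k\<bar>) * (\<Sum>k. \<bar>cc k\<bar>))"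
    by (rule Cauchy_product_sums) (use summable_abs_cc in auto)
  thus ?thesis unfolding sums_def Scc_def .
qed

lemma pos_zero:
  fixes Q :: "'a::real_inner \<Rightarrow> 'a"
  assumes bl: "bounded_linear Q" and sym: "\<And>x y. inner (Q x) y = inner x (Q y)"
    and pos: "\<And>x. 0 \<le> inner x (Q x)" and y: "inner y (Q y) = 0"
  shows "Q y = 0"
proof (rule ccontr)
  interpret Q: bounded_linear Q by fact
  assume "Q y \<noteq> 0"
  define a where "a = inner (Q y) (Q y)"
  define c where "c = inner (Q y) (Q (Q y))"
  have a0: "a > 0" using \<open>Q y \<noteq> 0\<close> by (simp add: a_def)
  have c0: "c \<ge> 0" using pos[of "Q y"] by (simp add: c_def)
  define t where "t = a / (c + 1)"
  have t0: "t > 0" using a0 c0 by (simp add: t_def)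
  have "0 \<le> inner (y - t *\<^sub>R Q y) (Q (y - t *\<^sub>R Q y))" by (rule pos)
  also have "Q (y - t *\<^sub>R Q y) = Q y - t *\<^sub>R Q (Q y)" by (simp add: Q.diff Q.scale)
  also have "inner (y - t *\<^sub>R Q y) (Q y - t *\<^sub>R Q (Q y))
     = inner y (Q y) - t * inner y (Q (Q y)) - t * inner (Q y) (Q y) + t * t * inner (Q y) (Q (Q y))"
    by (simp add: inner_diff_left inner_diff_right algebra_simps)
  also have "inner y (Q (Q y)) = a" using sym[of y "Q y"] by (simp add: a_def)
  finally have "0 \<le> t * (t * c - 2 * a)" using y by (simp add: a_def c_def algebra_simps)
  moreover have "t * c - 2 * a < 0"
  proof -
    have "t * c = a * (c / (c + 1))" by (simp add: t_def)
    also have "\<dots> \<le> a * 1" using a0 c0 by (intro mult_left_mono) auto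
    finally show ?thesis using a0 by simp
  qed
  ultimately show False using t0 by (simp add: mult_le_0_iff) (smt (verit) mult_pos_neg)
qed

lemma sqrt_unique:
  fixes P Q :: "'a::real_inner \<Rightarrow> 'a"
  assumes blP: "bounded_linear P" and symP: "\<And>x y. inner (P x) y = inner x (P y)"
    and posP: "\<And>x. 0 \<le> inner x (P x)"
    and blQ: "bounded_linear Q" and symQ: "\<And>x y. inner (Q x) y = inner x (Q y)"
    and posQ: "\<And>x. 0 \<le> inner x (Q x)"
    and sq: "\<And>x. P (P x) = Q (Q x)" and comm: "\<And>x. P (Q x) = Q (P x)"
  shows "P x = Q x"
proof -
  interpret P: bounded_linear P by fact
  interpret Q: bounded_linear Q by fact
  define y where "y = P x - Q x"
  have "inner y (P y) + inner y (Q y) = inner y (P y + Q y)" by (simp add: inner_add_right)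
  also have "P y + Q y = P (P x) - Q (Q x)"
    by (simp add: y_def P.diff Q.diff comm)
  also have "\<dots> = 0" using sq by simp
  finally have s0: "inner y (P y) + inner y (Q y) = 0" by simp
  have "inner y (P y) = 0" using s0 posP[of y] posQ[of y] by linarith
  hence Py: "P y = 0" by (rule pos_zero[OF blP symP posP])
  have "inner y (Q y) = 0" using s0 posP[of y] posQ[of y] by linarith
  hence Qy: "Q y = 0" by (rule pos_zero[OF blQ symQ posQ])
  have "inner y y = inner (P x) y - inner (Q x) y" by (simp add: y_def inner_diff_left)
  also have "\<dots> = inner x (P y) - inner x (Q y)" by (simp add: symP symQ)
  also have "\<dots> = 0" using Py Qy by simp
  finally show ?thesis by (simp add: y_def)
qed

locale sqop = cs J for J :: "'a::{real_inner,complete_space} \<Rightarrow> 'a" +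
  fixes T :: "'a \<Rightarrow> 'a"
  assumes T_bl: "bounded_linear T" and T_J: "\<And>x. T (J x) = J (T x)"
    and T_sym: "\<And>x y. inner (T x) y = inner x (T y)" and T_norm: "\<And>x. norm (T x) \<le> norm x"
begin

definition Tp :: "nat \<Rightarrow> 'a \<Rightarrow> 'a" where "Tp n = T ^^ n"

lemma Tp_0[simp]: "Tp 0 x = x" by (simp add: Tp_def)
lemma Tp_Suc: "Tp (Suc n) x = T (Tp n x)" by (simp add: Tp_def)

lemma Tp_bl: "bounded_linear (Tp n)"
proof (induction n)
  case 0
  have "Tp 0 = (\<lambda>x. x)" by (simp add: fun_eq_iff)
  thus ?case by (simp add: bounded_linear_ident)
next
  case (Suc n)
  have "Tp (Suc n) = (\<lambda>x. T (Tp n x))" by (simp add: fun_eq_iff Tp_Suc)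
  thus ?case using bounded_linear_compose[OF T_bl Suc] by simp
qed

lemma Tp_norm: "norm (Tp n x) \<le> norm x"
proof (induction n)
  case 0 thus ?case by simp
next
  case (Suc n) thus ?case using T_norm[of "Tp n x"] by (simp add: Tp_Suc)
qed

lemma Tp_comm:
  assumes "\<And>x. B (T x) = T (B x)" shows "B (Tp n x) = Tp n (B x)"
  by (induction n) (simp_all add: Tp_Suc assms)

lemma Tp_J: "Tp n (J x) = J (Tp n x)"
  by (rule Tp_comm[symmetric]) (simp add: T_J)

lemma Tp_T: "T (Tp n x) = Tp n (T x)"
  by (rule Tp_comm) simp

lemma Tp_sym: "inner (Tp n x) y = inner x (Tp n y)"
proof (induction n arbitrary: y)
  case 0 thus ?case by simp
next
  case (Suc n)
  have "inner (Tp (Suc n) x) y = inner (Tp n x) (T y)" by (simp add: Tp_Suc T_sym)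
  also have "\<dots> = inner x (Tp n (T y))" by (rule Suc)
  also have "\<dots> = inner x (Tp (Suc n) y)" by (simp add: Tp_Suc Tp_T)
  finally show ?case .
qed

lemma Tp_add: "Tp m (Tp n x) = Tp (m + n) x"
  by (simp add: Tp_def funpow_add)

lemma Tp_lin: "linear (Tp n)" using Tp_bl bounded_linear.linear by blast

lemma Tp_sum: "Tp n (sum f A) = sum (\<lambda>i. Tp n (f i)) A"
  using Tp_lin by (rule linear_sum)
lemma Tp_scale: "Tp n (r *\<^sub>R x) = r *\<^sub>R Tp n x"
  using Tp_lin by (rule linear_scale)
lemma Tp_plus: "Tp n (x + y) = Tp n x + Tp n y"
  using Tp_lin by (rule linear_add)
lemma Tp_minus: "Tp n (x - y) = Tp n x - Tp n y"
  using Tp_lin by (rule linear_diff)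

definition A :: "nat \<Rightarrow> 'a \<Rightarrow> 'a" where "A N x = (\<Sum>n<N. cc n *\<^sub>R Tp n x)"
definition SQ :: "'a \<Rightarrow> 'a" where "SQ x = (\<Sum>n. cc n *\<^sub>R Tp n x)"

lemma term_norm: "norm (cc n *\<^sub>R Tp n x) \<le> \<bar>cc n\<bar> * norm x"
  using Tp_norm[of n x] by (simp add: mult_left_mono)

lemma summ_norm: "summable (\<lambda>n. norm (cc n *\<^sub>R Tp n x))"
proof (rule summable_comparison_test[where g="\<lambda>n. \<bar>cc n\<bar> * norm x"])
  show "\<exists>N. \<forall>n\<ge>N. norm (norm (cc n *\<^sub>R Tp n x)) \<le> \<bar>cc n\<bar> * norm x"
    using term_norm by simp
  show "summable (\<lambda>n. \<bar>cc n\<bar> * norm x)" by (rule summable_mult2[OF summable_abs_cc])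
qed

lemma summ: "summable (\<lambda>n. cc n *\<^sub>R Tp n x)"
  by (rule summable_norm_cancel_c[OF summ_norm])

lemma SQ_tail: "norm (SQ x - A N x) \<le> tail N * norm x"
proof -
  have "SQ x = (\<Sum>n. cc (n + N) *\<^sub>R Tp (n + N) x) + A N x"
    unfolding SQ_def A_def by (rule suminf_split_initial_segment[OF summ])
  hence "SQ x - A N x = (\<Sum>n. cc (n + N) *\<^sub>R Tp (n + N) x)" by simp
  also have "norm \<dots> \<le> (\<Sum>n. norm (cc (n + N) *\<^sub>R Tp (n + N) x))"
    by (rule summable_norm_c) (rule summable_ignore_initial_segment[OF summ_norm])
  also have "\<dots> \<le> (\<Sum>n. \<bar>cc (n + N)\<bar> * norm x)"
  proof (rule suminf_le)
    show "\<And>n. norm (cc (n + N) *\<^sub>R Tp (n + N) x) \<le> \<bar>cc (n + N)\<bar> * norm x" by (rule term_norm)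
    show "summable (\<lambda>n. norm (cc (n + N) *\<^sub>R Tp (n + N) x))"
      by (rule summable_ignore_initial_segment[OF summ_norm])
    show "summable (\<lambda>n. \<bar>cc (n + N)\<bar> * norm x)"
      by (rule summable_mult2, rule summable_ignore_initial_segment[OF summable_abs_cc])
  qed
  also have "\<dots> = tail N * norm x"
    unfolding tail_def by (rule suminf_mult2[symmetric], rule summable_ignore_initial_segment[OF summable_abs_cc])
  finally show ?thesis .
qed

lemma A_bound: "norm (A N x) \<le> Scc * norm x"
proof -
  have "norm (A N x) \<le> (\<Sum>n<N. norm (cc n *\<^sub>R Tp n x))" unfolding A_def by (rule norm_sum)
  also have "\<dots> \<le> (\<Sum>n<N. \<bar>cc n\<bar> * norm x)" by (rule sum_mono) (rule term_norm)
  also have "\<dots> = (\<Sum>n<N. \<bar>cc n\<bar>) * norm x" by (simp add: sum_distrib_right)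
  also have "\<dots> \<le> Scc * norm x" by (rule mult_right_mono[OF Scc_ge]) simp
  finally show ?thesis .
qed

lemma SQ_bound: "norm (SQ x) \<le> Scc * norm x"
proof -
  have "norm (SQ x) \<le> (\<Sum>n. norm (cc n *\<^sub>R Tp n x))" unfolding SQ_def by (rule summable_norm_c[OF summ_norm])
  also have "\<dots> \<le> (\<Sum>n. \<bar>cc n\<bar> * norm x)"
    by (rule suminf_le[OF term_norm summ_norm summable_mult2[OF summable_abs_cc]])
  also have "\<dots> = Scc * norm x" unfolding Scc_def by (rule suminf_mult2[symmetric, OF summable_abs_cc])
  finally show ?thesis .
qed

lemma SQ_add: "SQ (x + y) = SQ x + SQ y"
  unfolding SQ_def by (simp add: Tp_plus scaleR_add_right suminf_add[OF summ summ])

lemma SQ_scale: "SQ (r *\<^sub>R x) = r *\<^sub>R SQ x"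
  unfolding SQ_def by (simp add: Tp_scale suminf_scaleR_right[OF summ] scaleR_scaleR mult.commute)

lemma SQ_bl: "bounded_linear SQ"
  by (rule bounded_linear_intro[where K=Scc]) (auto simp: SQ_add SQ_scale SQ_bound mult.commute)

lemma SQ_diff: "SQ (x - y) = SQ x - SQ y"
  using linear_diff[OF bounded_linear.linear[OF SQ_bl]] .

lemma SQ_comm:
  assumes bl: "bounded_linear B" and c: "\<And>x. B (T x) = T (B x)" shows "B (SQ x) = SQ (B x)"
proof -
  interpret B: bounded_linear B by fact
  have "B (SQ x) = (\<Sum>n. B (cc n *\<^sub>R Tp n x))" unfolding SQ_def by (rule B.suminf[OF summ])
  also have "\<dots> = SQ (B x)" unfolding SQ_def by (simp add: B.scale Tp_comm[where B=B, OF c])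
  finally show ?thesis .
qed

lemma SQ_J: "SQ (J x) = J (SQ x)"
  using SQ_comm[OF bl, of x] T_J by simp

lemma SQ_sym: "inner (SQ x) y = inner x (SQ y)"
proof -
  have "inner (SQ x) y = (\<Sum>n. inner (cc n *\<^sub>R Tp n x) y)"
    unfolding SQ_def by (rule bounded_linear.suminf[OF bounded_linear_inner_left summ])
  also have "\<dots> = (\<Sum>n. inner x (cc n *\<^sub>R Tp n y))" by (simp add: Tp_sym)
  also have "\<dots> = inner x (SQ y)"
    unfolding SQ_def by (rule bounded_linear.suminf[OF bounded_linear_inner_right summ, symmetric])
  finally show ?thesis .
qed

lemma SQ_pos: "0 \<le> inner x (SQ x)"
proof -
  have s1: "summable (\<lambda>n. inner x (cc n *\<^sub>R Tp n x))"
    by (rule bounded_linear.summable[OF bounded_linear_inner_right summ])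
  have "inner x (SQ x) = (\<Sum>n. inner x (cc n *\<^sub>R Tp n x))"
    unfolding SQ_def by (rule bounded_linear.suminf[OF bounded_linear_inner_right summ])
  moreover have "(\<Sum>n. cc n * norm x ^ 2) \<le> (\<Sum>n. inner x (cc n *\<^sub>R Tp n x))"
  proof (rule suminf_le)
    fix n
    show "cc n * norm x ^ 2 \<le> inner x (cc n *\<^sub>R Tp n x)"
    proof (cases n)
      case 0 thus ?thesis by (simp add: power2_norm_eq_inner)
    next
      case (Suc m)
      have "inner x (Tp n x) \<le> norm x * norm (Tp n x)" by (rule norm_cauchy_schwarz)
      also have "\<dots> \<le> norm x * norm x" by (rule mult_left_mono[OF Tp_norm]) simp
      finally have "inner x (Tp n x) \<le> norm x ^ 2" by (simp add: power2_eq_square)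
      moreover have "cc n \<le> 0" using Suc by (intro cc_nonpos) simp
      ultimately show ?thesis by (simp add: mult_left_mono_neg)
    qed
  next
    show "summable (\<lambda>n. cc n * norm x ^ 2)" by (rule summable_mult2[OF summable_cc])
    show "summable (\<lambda>n. inner x (cc n *\<^sub>R Tp n x))" by (rule s1)
  qed
  moreover have "(\<Sum>n. cc n * norm x ^ 2) = suminf cc * norm x ^ 2"
    by (rule suminf_mult2[symmetric, OF summable_cc])
  moreover have "0 \<le> suminf cc * norm x ^ 2" using suminf_cc_nonneg by simp
  ultimately show ?thesis by linarith
qed

end

context sqop begin

definition F :: "'a \<Rightarrow> nat \<Rightarrow> nat \<Rightarrow> 'a" where "F x m n = (cc m * cc n) *\<^sub>R Tp (m + n) x"

lemma AA: "A N (A N x) = (\<Sum>m<N. \<Sum>n<N. F x m n)"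
proof -
  have "A N (A N x) = (\<Sum>m<N. cc m *\<^sub>R Tp m (\<Sum>n<N. cc n *\<^sub>R Tp n x))" by (simp add: A_def)
  also have "\<dots> = (\<Sum>m<N. \<Sum>n<N. F x m n)"
  proof (rule sum.cong[OF refl])
    fix m
    have "cc m *\<^sub>R Tp m (\<Sum>n<N. cc n *\<^sub>R Tp n x) = cc m *\<^sub>R (\<Sum>n<N. cc n *\<^sub>R Tp m (Tp n x))"
      by (simp add: Tp_sum Tp_scale)
    also have "\<dots> = (\<Sum>n<N. F x m n)"
      by (simp add: scaleR_sum_right F_def Tp_add)
    finally show "cc m *\<^sub>R Tp m (\<Sum>n<N. cc n *\<^sub>R Tp n x) = (\<Sum>n<N. F x m n)" .
  qed
  finally show ?thesis .
qed

definition Sq :: "nat \<Rightarrow> (nat \<times> nat) set" where "Sq N = {..<N} \<times> {..<N}"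
definition Tri :: "nat \<Rightarrow> (nat \<times> nat) set" where "Tri N = {(i, j). i + j < N}"

lemma Tri_sub: "Tri N \<subseteq> Sq N" by (auto simp: Tri_def Sq_def)
lemma fin_Sq: "finite (Sq N)" by (simp add: Sq_def)

lemma sum_Sq: "(\<Sum>m<N. \<Sum>n<N. g m n) = (\<Sum>(m, n)\<in>Sq N. g m n)"
  unfolding Sq_def by (rule sum.cartesian_product)

lemma sum_split: "(\<Sum>(m, n)\<in>Sq N. g m n) = (\<Sum>(m, n)\<in>Sq N - Tri N. g m n) + (\<Sum>(m, n)\<in>Tri N. g m n)"
  by (rule sum.subset_diff[OF Tri_sub fin_Sq])

lemma sum_Tri: "(\<Sum>(m, n)\<in>Tri N. g m n) = (\<Sum>k<N. \<Sum>i\<le>k. g i (k - i))"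
  unfolding Tri_def by (rule sum.triangle_reindex)

lemma Tri_F: "(\<Sum>(m, n)\<in>Tri N. F x m n) = (\<Sum>k<N. (\<Sum>i\<le>k. cc i * cc (k - i)) *\<^sub>R Tp k x)"
  unfolding sum_Tri
proof (rule sum.cong[OF refl])
  fix k
  have "(\<Sum>i\<le>k. F x i (k - i)) = (\<Sum>i\<le>k. (cc i * cc (k - i)) *\<^sub>R Tp k x)"
    by (rule sum.cong[OF refl]) (simp add: F_def)
  also have "\<dots> = (\<Sum>i\<le>k. cc i * cc (k - i)) *\<^sub>R Tp k x" by (simp add: scaleR_sum_left)
  finally show "(\<Sum>i\<le>k. F x i (k - i)) = (\<Sum>i\<le>k. cc i * cc (k - i)) *\<^sub>R Tp k x" .
qed

lemma dd_sum: "(\<Sum>k<N + 2. (\<Sum>i\<le>k. cc i * cc (k - i)) *\<^sub>R Tp k x) = x - T x"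
proof (induction N)
  case 0
  have "(\<Sum>k<2. (\<Sum>i\<le>k. cc i * cc (k - i)) *\<^sub>R Tp k x) =
        (\<Sum>i\<le>0. cc i * cc (0 - i)) *\<^sub>R Tp 0 x + (\<Sum>i\<le>1. cc i * cc (1 - i)) *\<^sub>R Tp 1 x"
    by (simp add: numeral_2_eq_2)
  also have "\<dots> = x - T x" unfolding cc_conv by (simp add: Tp_Suc)
  finally show ?case by (simp add: Tp_Suc)
next
  case (Suc N)
  have "(\<Sum>i\<le>N + 2. cc i * cc (N + 2 - i)) = 0" unfolding cc_conv by simp
  thus ?case using Suc by simp
qed

lemma F_norm: "norm (F x m n) \<le> (\<bar>cc m\<bar> * \<bar>cc n\<bar>) * norm x"
  unfolding F_def using Tp_norm[of "m + n" x] by (simp add: abs_mult mult_left_mono)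

definition eps :: "nat \<Rightarrow> real" where
  "eps N = (\<Sum>m<N. \<bar>cc m\<bar>) * (\<Sum>m<N. \<bar>cc m\<bar>) - (\<Sum>k<N. \<Sum>i\<le>k. \<bar>cc i\<bar> * \<bar>cc (k - i)\<bar>)"

lemma eps_lim: "eps \<longlonglongrightarrow> 0"
proof -
  have l: "(\<lambda>N. \<Sum>m<N. \<bar>cc m\<bar>) \<longlonglongrightarrow> Scc"
    unfolding Scc_def by (rule summable_LIMSEQ[OF summable_abs_cc])
  have "eps \<longlonglongrightarrow> Scc * Scc - Scc * Scc"
    unfolding eps_def[abs_def] by (rule tendsto_diff[OF tendsto_mult[OF l l] cauchy_abs_cc])
  thus ?thesis by simp
qed

lemma rem_bound: "norm (\<Sum>(m, n)\<in>Sq N - Tri N. F x m n) \<le> eps N * norm x"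
proof -
  have "norm (\<Sum>(m, n)\<in>Sq N - Tri N. F x m n) \<le> (\<Sum>(m, n)\<in>Sq N - Tri N. norm (F x m n))"
    by (rule norm_sum[THEN order_trans]) (simp add: case_prod_unfold)
  also have "\<dots> \<le> (\<Sum>(m, n)\<in>Sq N - Tri N. (\<bar>cc m\<bar> * \<bar>cc n\<bar>) * norm x)"
    by (rule sum_mono) (simp add: case_prod_unfold F_norm)
  also have "\<dots> = (\<Sum>(m, n)\<in>Sq N - Tri N. \<bar>cc m\<bar> * \<bar>cc n\<bar>) * norm x"
    by (simp add: sum_distrib_right case_prod_unfold)
  also have "(\<Sum>(m, n)\<in>Sq N - Tri N. \<bar>cc m\<bar> * \<bar>cc n\<bar>) = eps N"
  proof -
    have "(\<Sum>(m, n)\<in>Sq N. \<bar>cc m\<bar> * \<bar>cc n\<bar>) = (\<Sum>(m, n)\<in>Sq N - Tri N. \<bar>cc m\<bar> * \<bar>cc n\<bar>) + (\<Sum>(m, n)\<in>Tri N. \<bar>cc m\<bar> * \<bar>cc n\<bar>)"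
      by (rule sum_split)
    moreover have "(\<Sum>(m, n)\<in>Sq N. \<bar>cc m\<bar> * \<bar>cc n\<bar>) = (\<Sum>m<N. \<bar>cc m\<bar>) * (\<Sum>m<N. \<bar>cc m\<bar>)"
      unfolding sum_Sq[symmetric] by (simp add: sum_product)
    moreover have "(\<Sum>(m, n)\<in>Tri N. \<bar>cc m\<bar> * \<bar>cc n\<bar>) = (\<Sum>k<N. \<Sum>i\<le>k. \<bar>cc i\<bar> * \<bar>cc (k - i)\<bar>)"
      by (rule sum_Tri)
    ultimately show ?thesis unfolding eps_def by linarith
  qed
  finally show ?thesis .
qed

lemma AA_lim: "(\<lambda>N. A N (A N x)) \<longlonglongrightarrow> x - T x"
proof -
  have "eventually (\<lambda>N. norm (A N (A N x) - (x - T x)) \<le> eps N * norm x) sequentially"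
  proof (rule eventually_sequentiallyI[of 2])
    fix N :: nat assume N: "2 \<le> N"
    define M where "M = N - 2"
    have M: "N = M + 2" using N by (simp add: M_def)
    have "A N (A N x) = (\<Sum>(m, n)\<in>Sq N - Tri N. F x m n) + (\<Sum>(m, n)\<in>Tri N. F x m n)"
      unfolding AA sum_Sq by (rule sum_split)
    also have "(\<Sum>(m, n)\<in>Tri N. F x m n) = x - T x"
      unfolding Tri_F M by (rule dd_sum)
    finally have "A N (A N x) - (x - T x) = (\<Sum>(m, n)\<in>Sq N - Tri N. F x m n)" by simp
    thus "norm (A N (A N x) - (x - T x)) \<le> eps N * norm x" using rem_bound by simp
  qed
  moreover have "(\<lambda>N. eps N * norm x) \<longlonglongrightarrow> 0 * norm x" by (rule tendsto_mult[OF eps_lim tendsto_const])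
  hence "(\<lambda>N. eps N * norm x) \<longlonglongrightarrow> 0" by simp
  ultimately have "(\<lambda>N. A N (A N x) - (x - T x)) \<longlonglongrightarrow> 0"
    by (rule Lim_null_comparison)
  thus ?thesis by (rule LIM_zero_cancel)
qed

lemma AA_lim2: "(\<lambda>N. A N (A N x)) \<longlonglongrightarrow> SQ (SQ x)"
proof -
  have b: "norm (SQ (SQ x) - A N (A N x)) \<le> Scc * (tail N * norm x) + tail N * (Scc * norm x)" for N
  proof -
    have "SQ (SQ x) - A N (A N x) = SQ (SQ x - A N x) + (SQ (A N x) - A N (A N x))"
      by (simp add: SQ_diff)
    hence "norm (SQ (SQ x) - A N (A N x)) \<le> norm (SQ (SQ x - A N x)) + norm (SQ (A N x) - A N (A N x))"
      by (metis norm_triangle_ineq)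
    also have "norm (SQ (SQ x - A N x)) \<le> Scc * (tail N * norm x)"
      using SQ_bound[of "SQ x - A N x"] SQ_tail[of x N] Scc_nonneg by (meson mult_left_mono order_trans)
    also have "norm (SQ (A N x) - A N (A N x)) \<le> tail N * (Scc * norm x)"
      using SQ_tail[of "A N x" N] A_bound[of N x] tail_nonneg[of N] by (meson mult_left_mono order_trans)
    finally show ?thesis by simp
  qed
  have "(\<lambda>N. Scc * (tail N * norm x) + tail N * (Scc * norm x)) \<longlonglongrightarrow> Scc * (0 * norm x) + 0 * (Scc * norm x)"
    by (intro tendsto_intros tail_lim)
  hence l0: "(\<lambda>N. Scc * (tail N * norm x) + tail N * (Scc * norm x)) \<longlonglongrightarrow> 0" by simp
  have "eventually (\<lambda>N. norm (SQ (SQ x) - A N (A N x)) \<le> Scc * (tail N * norm x) + tail N * (Scc * norm x)) sequentially"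
    using b by simp
  hence "(\<lambda>N. SQ (SQ x) - A N (A N x)) \<longlonglongrightarrow> 0"
    using l0 by (rule Lim_null_comparison)
  hence "(\<lambda>N. - (SQ (SQ x) - A N (A N x))) \<longlonglongrightarrow> - 0" by (rule tendsto_minus)
  hence "(\<lambda>N. A N (A N x) - SQ (SQ x)) \<longlonglongrightarrow> 0" by simp
  thus ?thesis by (rule LIM_zero_cancel)
qed

lemma SQ_sq: "SQ (SQ x) = x - T x"
  using AA_lim2 AA_lim by (rule LIMSEQ_unique)

end

context sa begin

lemma T_sum: "finite A \<Longrightarrow> (\<And>i. i \<in> A \<Longrightarrow> f i \<in> D) \<Longrightarrow> sum f A \<in> D \<and> T (sum f A) = sum (\<lambda>i. T (f i)) A"
proof (induction A rule: finite_induct)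
  case empty thus ?case using D_0 by simp
next
  case (insert a A)
  hence "sum f A \<in> D" "T (sum f A) = (\<Sum>i\<in>A. T (f i))" "f a \<in> D" by auto
  thus ?case using insert by (simp add: mem_add T_add)
qed

lemma sq_uniq:
  assumes R: "R \<noteq> 0" and b: "b \<in> D" "T b \<in> D" and e: "T (T b) + R^2 *\<^sub>R b = 0"
  shows "b = 0"
proof -
  have "0 = inner (T (T b) + R^2 *\<^sub>R b) b" using e by simp
  also have "\<dots> = inner (T b) (T b) + R^2 * inner b b"
    using sym[OF b(2) b(1)] by (simp add: inner_add_left)
  finally have "inner (T b) (T b) + R^2 * inner b b = 0" by simp
  moreover have "inner (T b) (T b) \<ge> 0" "R^2 * inner b b \<ge> 0" by simp_all
  ultimately have "R^2 * inner b b = 0" by linarith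
  thus ?thesis using R by simp
qed

lemma sq_ex:
  assumes R: "R \<noteq> 0"
  shows "\<exists>b. b \<in> D \<and> T b \<in> D \<and> T (T b) + R^2 *\<^sub>R b = y"
proof -
  have R': "- R \<noteq> 0" using R by simp
  define u where "u = res R y"
  define b where "b = res (- R) u"
  have u: "u \<in> D" "T u + R *\<^sub>R J u = y" using res[OF R] by (auto simp: u_def)
  have b: "b \<in> D" "T b + (- R) *\<^sub>R J b = u" using res[OF R'] by (auto simp: b_def)
  have Tb: "T b = u + R *\<^sub>R J b" using b(2) by (simp add: algebra_simps)
  have TbD: "T b \<in> D" unfolding Tb using u(1) b(1) by (intro mem_add mem_scale mem_J)
  have "T (T b) = T u + R *\<^sub>R T (J b)"
    unfolding Tb using u(1) b(1) by (simp add: T_add mem_scale mem_J T_scale)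
  also have "T (J b) = J (T b)" using T_J b(1) by simp
  also have "J (T b) = J u - R *\<^sub>R b" unfolding Tb by simp
  finally have "T (T b) = T u + R *\<^sub>R J u - R^2 *\<^sub>R b" by (simp add: algebra_simps power2_eq_square)
  hence "T (T b) + R^2 *\<^sub>R b = y" using u(2) by simp
  thus ?thesis using b(1) TbD by blast
qed

definition K :: "real \<Rightarrow> 'a \<Rightarrow> 'a" where "K R y = sq_inv D T R y"

lemma K_ex:
  assumes R: "R \<noteq> 0"
  shows "K R y \<in> D" "T (K R y) \<in> D" "T (T (K R y)) + R^2 *\<^sub>R K R y = y"
proof -
  obtain b where b: "b \<in> D" "T b \<in> D" "T (T b) + R^2 *\<^sub>R b = y" using sq_ex[OF R] by blast
  have "K R y = b" unfolding K_def sq_inv_def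
  proof (rule the_equality)
    show "b \<in> D \<and> T b \<in> D \<and> T (T b) + R^2 *\<^sub>R b = y" using b by blast
  next
    fix b' assume b': "b' \<in> D \<and> T b' \<in> D \<and> T (T b') + R^2 *\<^sub>R b' = y"
    have "b' - b = 0"
    proof (rule sq_uniq[OF R])
      show "b' - b \<in> D" using b b' by (intro mem_diff) auto
      show "T (b' - b) \<in> D" using b b' by (simp add: T_diff mem_diff)
      have h: "T (T (b' - b)) = T (T b') - T (T b)" using b b' by (simp add: T_diff)
      have "T (T (b' - b)) + R^2 *\<^sub>R (b' - b) = (T (T b') + R^2 *\<^sub>R b') - (T (T b) + R^2 *\<^sub>R b)"
        unfolding h by (simp add: algebra_simps)
      also have "\<dots> = 0" using b b' by simp
      finally show "T (T (b' - b)) + R^2 *\<^sub>R (b' - b) = 0" .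
    qed
    thus "b' = b" by simp
  qed
  thus "K R y \<in> D" "T (K R y) \<in> D" "T (T (K R y)) + R^2 *\<^sub>R K R y = y" using b by auto
qed

lemma K_eq:
  assumes R: "R \<noteq> 0" and b: "b \<in> D" "T b \<in> D" "T (T b) + R^2 *\<^sub>R b = y"
  shows "K R y = b"
proof -
  have "K R y - b = 0"
  proof (rule sq_uniq[OF R])
    show "K R y - b \<in> D" using b K_ex[OF R] by (intro mem_diff) auto
    show "T (K R y - b) \<in> D" using b K_ex[OF R, of y] by (simp add: T_diff mem_diff)
    have h: "T (T (K R y - b)) = T (T (K R y)) - T (T b)" using b K_ex[OF R, of y] by (simp add: T_diff)
    have "T (T (K R y - b)) + R^2 *\<^sub>R (K R y - b) = (T (T (K R y)) + R^2 *\<^sub>R K R y) - (T (T b) + R^2 *\<^sub>R b)"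
      unfolding h by (simp add: algebra_simps)
    also have "\<dots> = 0" using b K_ex(3)[OF R, of y] by simp
    finally show "T (T (K R y - b)) + R^2 *\<^sub>R (K R y - b) = 0" .
  qed
  thus ?thesis by simp
qed

lemma K_add: "R \<noteq> 0 \<Longrightarrow> K R (x + y) = K R x + K R y"
  by (rule K_eq) (use K_ex[of R x] K_ex[of R y] in \<open>auto simp: T_add mem_add algebra_simps\<close>)

lemma K_scale: "R \<noteq> 0 \<Longrightarrow> K R (r *\<^sub>R x) = r *\<^sub>R K R x"
proof -
  assume R: "R \<noteq> 0"
  have "T (T (r *\<^sub>R K R x)) + R^2 *\<^sub>R (r *\<^sub>R K R x) = r *\<^sub>R (T (T (K R x)) + R^2 *\<^sub>R K R x)"
    using K_ex(1,2)[OF R, of x] by (simp add: T_scale mem_scale scaleR_add_right)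
  also have "\<dots> = r *\<^sub>R x" by (simp only: K_ex(3)[OF R])
  finally show ?thesis using K_ex[OF R, of x] by (intro K_eq[OF R]) (auto simp: T_scale mem_scale)
qed

lemma K_J: "R \<noteq> 0 \<Longrightarrow> K R (J x) = J (K R x)"
proof -
  assume R: "R \<noteq> 0"
  have "T (T (J (K R x))) + R^2 *\<^sub>R J (K R x) = J (T (T (K R x)) + R^2 *\<^sub>R K R x)"
    using K_ex(1,2)[OF R, of x] by (simp add: T_J mem_J)
  also have "\<dots> = J x" by (simp only: K_ex(3)[OF R])
  finally show ?thesis using K_ex[OF R, of x] by (intro K_eq[OF R]) (auto simp: T_J mem_J)
qed

lemma K_sym: assumes R: "R \<noteq> 0" shows "inner (K R x) y = inner x (K R y)"
proof -
  define a where "a = K R x"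
  define b where "b = K R y"
  have a: "a \<in> D" "T a \<in> D" "x = T (T a) + R^2 *\<^sub>R a" using K_ex[OF R, of x] by (auto simp: a_def)
  have b: "b \<in> D" "T b \<in> D" "y = T (T b) + R^2 *\<^sub>R b" using K_ex[OF R, of y] by (auto simp: b_def)
  have "inner a y = inner a (T (T b)) + R^2 * inner a b" using b(3) by (simp add: inner_add_right)
  also have "inner a (T (T b)) = inner (T a) (T b)" using sym[OF a(1) b(2)] by simp
  also have "\<dots> = inner (T (T a)) b" using sym[OF a(2) b(1)] by simp
  also have "inner (T (T a)) b + R^2 * inner a b = inner x b" using a(3) by (simp add: inner_add_left)
  finally show ?thesis by (simp add: a_def b_def)
qed

lemma norm_id2:
  assumes b: "b \<in> D" "T b \<in> D"
  shows "norm (T (T b) + R^2 *\<^sub>R b)^2 = norm (T (T b))^2 + 2 * R^2 * norm (T b)^2 + R^2 * R^2 * norm b^2"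
proof -
  have i: "inner (T (T b)) b = inner (T b) (T b)" using sym[OF b(2) b(1)] by simp
  have "norm (T (T b) + R^2 *\<^sub>R b)^2 = inner (T (T b) + R^2 *\<^sub>R b) (T (T b) + R^2 *\<^sub>R b)"
    by (simp add: power2_norm_eq_inner)
  also have "\<dots> = inner (T (T b)) (T (T b)) + 2 * R^2 * inner (T (T b)) b + R^2 * R^2 * inner b b"
    by (simp add: inner_add_left inner_add_right inner_commute algebra_simps)
  also have "\<dots> = norm (T (T b))^2 + 2 * R^2 * norm (T b)^2 + R^2 * R^2 * norm b^2"
    unfolding i by (simp add: power2_norm_eq_inner)
  finally show ?thesis .
qed

lemma K_bounds:
  assumes R: "R \<noteq> 0"
  shows "R^2 * norm (K R y) \<le> norm y" "norm (T (T (K R y))) \<le> norm y" "\<bar>R\<bar> * norm (T (K R y)) \<le> norm y"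
proof -
  have e: "norm y^2 = norm (T (T (K R y)))^2 + 2 * R^2 * norm (T (K R y))^2 + R^2 * R^2 * norm (K R y)^2"
    using norm_id2[OF K_ex(1,2)[OF R, of y], where R=R] K_ex(3)[OF R, of y] by simp
  have "(R^2 * norm (K R y))^2 \<le> norm y^2" unfolding e by (simp add: power_mult_distrib power2_eq_square)
  thus "R^2 * norm (K R y) \<le> norm y" by (rule power2_le_imp_le) simp
  have "(norm (T (T (K R y))))^2 \<le> norm y^2" unfolding e by simp
  thus "norm (T (T (K R y))) \<le> norm y" by (rule power2_le_imp_le) simp
  have "(\<bar>R\<bar> * norm (T (K R y)))^2 \<le> norm y^2" unfolding e by (simp add: power_mult_distrib)
  thus "\<bar>R\<bar> * norm (T (K R y)) \<le> norm y" by (rule power2_le_imp_le) simp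
qed

lemma K_bl: assumes R: "R \<noteq> 0" shows "bounded_linear (K R)"
proof (rule bounded_linear_intro[where K="1 / R^2"])
  show "K R (x + y) = K R x + K R y" for x y by (rule K_add[OF R])
  show "K R (r *\<^sub>R x) = r *\<^sub>R K R x" for r x by (rule K_scale[OF R])
  show "norm (K R x) \<le> norm x * (1 / R^2)" for x using K_bounds(1)[OF R, of x] R by (simp add: field_simps)
qed

lemma K_D: assumes R: "R \<noteq> 0" and x: "x \<in> D" shows "K R (T x) = T (K R x)"
proof (rule K_eq[OF R])
  show "T (K R x) \<in> D" using K_ex[OF R] by simp
  have e: "T (T (K R x)) = x - R^2 *\<^sub>R K R x" using K_ex(3)[OF R, of x] by (simp add: algebra_simps)
  show "T (T (K R x)) \<in> D" unfolding e using x K_ex(1)[OF R, of x] by (intro mem_diff mem_scale)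
  have "T (T (T (K R x))) = T x - R^2 *\<^sub>R T (K R x)" unfolding e using x K_ex(1)[OF R, of x]
    by (simp add: T_diff mem_scale T_scale)
  thus "T (T (T (K R x))) + R^2 *\<^sub>R T (K R x) = T x" by simp
qed

definition TR :: "real \<Rightarrow> 'a \<Rightarrow> 'a" where "TR R y = y - R^2 *\<^sub>R K R y"

lemma TR_eq: "R \<noteq> 0 \<Longrightarrow> TR R y = T (T (K R y))"
  using K_ex(3)[of R y] by (simp add: TR_def algebra_simps)

lemma sqop_TR: assumes R: "R \<noteq> 0" shows "sqop J (TR R)"
proof -
  have 1: "bounded_linear (TR R)" unfolding TR_def[abs_def]
    by (rule bounded_linear_sub[OF bounded_linear_ident bounded_linear_compose[OF bounded_linear_scaleR_right K_bl[OF R]]])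
  have 2: "TR R (J x) = J (TR R x)" for x by (simp add: TR_def K_J[OF R])
  have 3: "inner (TR R x) y = inner x (TR R y)" for x y
    by (simp add: TR_def inner_diff_left inner_diff_right K_sym[OF R])
  have 4: "norm (TR R x) \<le> norm x" for x unfolding TR_eq[OF R] by (rule K_bounds(2)[OF R])
  show ?thesis
    by (rule sqop.intro[OF cs_axioms], rule sqop_axioms.intro) (use 1 2 3 4 in auto)
qed

lemma TR_D: assumes R: "R \<noteq> 0" and x: "x \<in> D" shows "TR R x \<in> D" "T (TR R x) = TR R (T x)"
proof -
  show "TR R x \<in> D" unfolding TR_def using x K_ex(1)[OF R, of x] by (intro mem_diff mem_scale)
  show "T (TR R x) = TR R (T x)" unfolding TR_def using x K_ex(1)[OF R, of x]
    by (simp add: T_diff mem_scale T_scale K_D[OF R x])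
qed

lemma TR_D_bound: assumes R: "R \<noteq> 0" and x: "x \<in> D" shows "\<bar>R\<bar> * norm (TR R x) \<le> norm (T x)"
proof -
  have "TR R x = T (K R (T x))" unfolding TR_eq[OF R] K_D[OF R x] ..
  thus ?thesis using K_bounds(3)[OF R, of "T x"] by simp
qed

end

context sqop begin

lemma SQ_lin: "linear SQ" using SQ_bl bounded_linear.linear by blast

lemma SQ_close: "norm (x - SQ x) \<le> norm (T x)"
proof -
  define y where "y = x - SQ x"
  have "y + SQ y = x - SQ (SQ x)" by (simp add: y_def SQ_diff)
  also have "\<dots> = T x" by (simp add: SQ_sq)
  finally have e: "y + SQ y = T x" .
  have "norm y ^ 2 = inner y y" by (simp add: power2_norm_eq_inner)
  also have "\<dots> \<le> inner y y + inner y (SQ y)" using SQ_pos[of y] by simp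
  also have "\<dots> = inner y (T x)" using e by (metis inner_add_right)
  also have "\<dots> \<le> norm y * norm (T x)" by (rule norm_cauchy_schwarz)
  finally have "norm y * norm y \<le> norm y * norm (T x)" by (simp add: power2_eq_square)
  hence "norm y \<le> norm (T x)" by (cases "norm y = 0") (auto simp: mult_le_cancel_left)
  thus ?thesis by (simp add: y_def)
qed

end

lemma Cauchy_lip:
  fixes f :: "nat \<Rightarrow> 'a::real_normed_vector" and xs :: "nat \<Rightarrow> 'b::real_normed_vector"
  assumes C: "Cauchy xs" and c: "c > 0" and b: "\<And>m n. norm (f m - f n) \<le> c * norm (xs m - xs n)"
  shows "Cauchy f"
proof (rule metric_CauchyI)
  fix e :: real assume e: "e > 0"
  have "e / c > 0" using e c by simp
  then obtain N where N: "\<forall>m\<ge>N. \<forall>n\<ge>N. dist (xs m) (xs n) < e / c" using metric_CauchyD[OF C] by blast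
  show "\<exists>N. \<forall>m\<ge>N. \<forall>n\<ge>N. dist (f m) (f n) < e"
  proof (intro exI allI impI)
    fix m n assume "N \<le> m" "N \<le> n"
    hence "norm (xs m - xs n) < e / c" using N by (simp add: dist_norm)
    hence "c * norm (xs m - xs n) < e" using c by (simp add: field_simps)
    thus "dist (f m) (f n) < e" using b[of m n] by (simp add: dist_norm)
  qed
qed

lemma dense_eq:
  fixes f g :: "'a::real_normed_vector \<Rightarrow> 'b::real_normed_vector"
  assumes "closure D = UNIV" "bounded_linear f" "bounded_linear g" "\<And>y. y \<in> D \<Longrightarrow> f y = g y"
  shows "f y = g y"
proof -
  have cf: "continuous_on UNIV f" by (rule linear_continuous_on[OF assms(2)])
  have cg: "continuous_on UNIV g" by (rule linear_continuous_on[OF assms(3)])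
  have "closed {y. f y = g y}"
    using continuous_closed_preimage_constant[of UNIV "\<lambda>y. f y - g y" 0] cf cg
    by (simp add: continuous_on_diff)
  moreover have "D \<subseteq> {y. f y = g y}" using assms(4) by blast
  ultimately have "closure D \<subseteq> {y. f y = g y}" by (rule closure_minimal[rotated])
  thus ?thesis using assms(1) by blast
qed

context sa begin

definition Phi :: "real \<Rightarrow> 'a \<Rightarrow> 'a" where "Phi R = sqop.SQ (TR R)"

lemma Phi_facts:
  assumes R: "R \<noteq> 0"
  shows "bounded_linear (Phi R)" "\<And>x. Phi R (J x) = J (Phi R x)"
    "\<And>x y. inner (Phi R x) y = inner x (Phi R y)" "\<And>x. 0 \<le> inner x (Phi R x)"
    "\<And>x. Phi R (Phi R x) = R^2 *\<^sub>R K R x"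
    "\<And>x. norm (x - Phi R x) \<le> norm (TR R x)"
proof -
  interpret S: sqop J "TR R" by (rule sqop_TR[OF R])
  show "bounded_linear (Phi R)" unfolding Phi_def by (rule S.SQ_bl)
  show "\<And>x. Phi R (J x) = J (Phi R x)" unfolding Phi_def by (rule S.SQ_J)
  show "\<And>x y. inner (Phi R x) y = inner x (Phi R y)" unfolding Phi_def by (rule S.SQ_sym)
  show "\<And>x. 0 \<le> inner x (Phi R x)" unfolding Phi_def by (rule S.SQ_pos)
  show "\<And>x. Phi R (Phi R x) = R^2 *\<^sub>R K R x" unfolding Phi_def S.SQ_sq by (simp add: TR_def)
  show "\<And>x. norm (x - Phi R x) \<le> norm (TR R x)" unfolding Phi_def by (rule S.SQ_close)
qed

lemma Phi_comm:
  assumes R: "R \<noteq> 0" and bl: "bounded_linear B" and c: "\<And>x. B (TR R x) = TR R (B x)"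
  shows "B (Phi R x) = Phi R (B x)"
proof -
  interpret S: sqop J "TR R" by (rule sqop_TR[OF R])
  show ?thesis unfolding Phi_def by (rule S.SQ_comm[OF bl c])
qed

lemma psqrt_eq:
  assumes R: "R > 0"
  shows "psqrt J (sq_inv D T R) = (\<lambda>x. (1 / R) *\<^sub>R Phi R x)"
proof -
  have R0: "R \<noteq> 0" using R by simp
  define Q where "Q = (\<lambda>x. (1 / R) *\<^sub>R Phi R x)"
  interpret P: bounded_linear "Phi R" by (rule Phi_facts(1)[OF R0])
  have Qbl: "bounded_linear Q" unfolding Q_def
    by (rule bounded_linear_compose[OF bounded_linear_scaleR_right Phi_facts(1)[OF R0]])
  have QJ: "Q (J x) = J (Q x)" for x by (simp add: Q_def Phi_facts(2)[OF R0])
  have Qsym: "inner (Q x) y = inner x (Q y)" for x y by (simp add: Q_def Phi_facts(3)[OF R0])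
  have Qpos: "0 \<le> inner x (Q x)" for x using Phi_facts(4)[OF R0, of x] R by (simp add: Q_def)
  have QQ: "Q (Q x) = sq_inv D T R x" for x
    using Phi_facts(5)[OF R0, of x] R by (simp add: Q_def P.scale K_def power2_eq_square)
  have Qc: "cinner J (Q x) y = cinner J x (Q y)" for x y
    by (simp add: cinner_eq_iff Qsym QJ[symmetric])
  show ?thesis unfolding psqrt_def Q_def[symmetric]
  proof (rule the_equality)
    show "cbounded J J Q \<and> (\<forall>x y. cinner J (Q x) y = cinner J x (Q y)) \<and> (\<forall>x. 0 \<le> inner x (Q x)) \<and> (\<forall>x. Q (Q x) = sq_inv D T R x)"
      using Qbl QJ Qc Qpos QQ by (simp add: cbounded_def)
  next
    fix P' assume h: "cbounded J J P' \<and> (\<forall>x y. cinner J (P' x) y = cinner J x (P' y)) \<and> (\<forall>x. 0 \<le> inner x (P' x)) \<and> (\<forall>x. P' (P' x) = sq_inv D T R x)"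
    have P'bl: "bounded_linear P'" using h by (simp add: cbounded_def)
    interpret P': bounded_linear P' by fact
    have P'sym: "inner (P' x) y = inner x (P' y)" for x y using h by (simp add: cinner_eq_iff)
    have P'pos: "0 \<le> inner x (P' x)" for x using h by simp
    have P'P': "P' (P' x) = K R x" for x using h by (simp add: K_def)
    have cT: "P' (TR R x) = TR R (P' x)" for x
      by (simp add: TR_def P'.diff P'.scale P'P'[symmetric])
    have cPhi: "P' (Phi R x) = Phi R (P' x)" for x by (rule Phi_comm[OF R0 P'bl cT])
    have "P' x = Q x" for x
    proof (rule sqrt_unique[OF P'bl P'sym P'pos Qbl Qsym Qpos])
      show "P' (P' x) = Q (Q x)" for x using QQ P'P' by (simp add: K_def)
      show "P' (Q x) = Q (P' x)" for x by (simp add: Q_def P'.scale cPhi)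
    qed
    thus "P' = Q" by (rule ext)
  qed
qed

lemma PhiR_eq: "R > 0 \<Longrightarrow> PhiR J D T R = Phi R"
  by (rule ext) (simp add: PhiR_def psqrt_eq)

end

context sa begin

lemma Tp_D:
  assumes R: "R \<noteq> 0" and x: "x \<in> D"
  shows "sqop.Tp (TR R) n x \<in> D \<and> T (sqop.Tp (TR R) n x) = sqop.Tp (TR R) n (T x)"
proof -
  interpret S: sqop J "TR R" by (rule sqop_TR[OF R])
  show ?thesis
  proof (induction n)
    case 0 thus ?case using x by simp
  next
    case (Suc n)
    thus ?case using TR_D[OF R] by (simp add: S.Tp_Suc)
  qed
qed

lemma Phi_D:
  assumes R: "R \<noteq> 0" and x: "x \<in> D"
  shows "Phi R x \<in> D" "T (Phi R x) = Phi R (T x)"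
proof -
  interpret S: sqop J "TR R" by (rule sqop_TR[OF R])
  have AD: "S.A N x \<in> D \<and> T (S.A N x) = S.A N (T x)" for N
  proof -
    have h: "\<And>n. n \<in> {..<N} \<Longrightarrow> cc n *\<^sub>R S.Tp n x \<in> D" using Tp_D[OF R x] by (simp add: mem_scale)
    have ts: "(\<Sum>n<N. cc n *\<^sub>R S.Tp n x) \<in> D \<and> T (\<Sum>n<N. cc n *\<^sub>R S.Tp n x) = (\<Sum>n<N. T (cc n *\<^sub>R S.Tp n x))"
      by (rule T_sum[of "{..<N}" "\<lambda>n. cc n *\<^sub>R S.Tp n x"]) (use h in auto)
    have "T (S.A N x) = (\<Sum>n<N. T (cc n *\<^sub>R S.Tp n x))" unfolding S.A_def using ts by simp
    also have "\<dots> = S.A N (T x)" unfolding S.A_def using Tp_D[OF R x] by (simp add: T_scale)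
    finally show ?thesis unfolding S.A_def using ts by simp
  qed
  have l1: "(\<lambda>N. S.A N x) \<longlonglongrightarrow> Phi R x" unfolding Phi_def S.A_def[abs_def] S.SQ_def
    by (rule summable_LIMSEQ[OF S.summ])
  have l2': "(\<lambda>N. S.A N (T x)) \<longlonglongrightarrow> Phi R (T x)" unfolding Phi_def S.A_def[abs_def] S.SQ_def
    by (rule summable_LIMSEQ[OF S.summ])
  have "(\<lambda>N. T (S.A N x)) = (\<lambda>N. S.A N (T x))" using AD by auto
  hence l2: "(\<lambda>N. T (S.A N x)) \<longlonglongrightarrow> Phi R (T x)" using l2' by simp
  have "Phi R x \<in> D \<and> T (Phi R x) = Phi R (T x)" by (rule closed_graph[OF _ l1 l2]) (use AD in blast)
  thus "Phi R x \<in> D" "T (Phi R x) = Phi R (T x)" by auto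
qed

lemma Phi_D_bound:
  assumes R: "R \<noteq> 0" and x: "x \<in> D"
  shows "norm (T (Phi R x)) \<le> \<bar>R\<bar> * norm x"
proof -
  interpret P: bounded_linear "Phi R" by (rule Phi_facts(1)[OF R])
  have PxD: "Phi R x \<in> D" by (rule Phi_D(1)[OF R x])
  have KD: "K R x \<in> D" "T (K R x) \<in> D" using K_ex[OF R] by auto
  have "norm (T (Phi R x))^2 = inner (T (Phi R x)) (Phi R (T x))"
    by (simp add: power2_norm_eq_inner Phi_D(2)[OF R x])
  also have "\<dots> = inner (Phi R (T (Phi R x))) (T x)" by (simp add: Phi_facts(3)[OF R])
  also have "Phi R (T (Phi R x)) = T (Phi R (Phi R x))" by (simp add: Phi_D(2)[OF R PxD])
  also have "\<dots> = R^2 *\<^sub>R T (K R x)" by (simp add: Phi_facts(5)[OF R] T_scale KD)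
  also have "inner (R^2 *\<^sub>R T (K R x)) (T x) = R^2 * inner (T (T (K R x))) x"
    using sym[OF KD(2) x] by simp
  also have "T (T (K R x)) = TR R x" by (simp add: TR_eq[OF R])
  finally have e: "norm (T (Phi R x))^2 = R^2 * inner (TR R x) x" .
  have "inner (TR R x) x \<le> norm (TR R x) * norm x" by (rule norm_cauchy_schwarz)
  also have "\<dots> \<le> norm x * norm x" using sqop.T_norm[OF sqop_TR[OF R]] by (simp add: mult_right_mono)
  finally have i: "inner (TR R x) x \<le> norm x * norm x" .
  have "R^2 * inner (TR R x) x \<le> R^2 * (norm x * norm x)" by (rule mult_left_mono[OF i]) simp
  also have "\<dots> = (\<bar>R\<bar> * norm x)^2" by (simp add: power_mult_distrib power2_eq_square)
  finally have "norm (T (Phi R x))^2 \<le> (\<bar>R\<bar> * norm x)^2" unfolding e .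
  thus ?thesis by (rule power2_le_imp_le) simp
qed

lemma Phi_range:
  assumes R: "R \<noteq> 0"
  shows "Phi R x \<in> D" "norm (T (Phi R x)) \<le> \<bar>R\<bar> * norm x"
proof -
  interpret P: bounded_linear "Phi R" by (rule Phi_facts(1)[OF R])
  have "x \<in> closure D" using dense by simp
  then obtain xs where xsD: "\<And>n. xs n \<in> D" and xs: "xs \<longlonglongrightarrow> x"
    unfolding closure_sequential by blast
  have lP: "(\<lambda>n. Phi R (xs n)) \<longlonglongrightarrow> Phi R x" by (rule P.tendsto[OF xs])
  have "Cauchy (\<lambda>n. T (Phi R (xs n)))"
  proof (rule Cauchy_lip[OF LIMSEQ_imp_Cauchy[OF xs], where c="\<bar>R\<bar> + 1"])
    show "\<bar>R\<bar> + 1 > 0" by simp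
    fix m n
    have "T (Phi R (xs m)) - T (Phi R (xs n)) = T (Phi R (xs m - xs n))"
      by (simp add: P.diff T_diff Phi_D(1)[OF R xsD])
    also have "norm \<dots> \<le> \<bar>R\<bar> * norm (xs m - xs n)" by (rule Phi_D_bound[OF R mem_diff[OF xsD xsD]])
    also have "\<dots> \<le> (\<bar>R\<bar> + 1) * norm (xs m - xs n)" by (simp add: mult_right_mono)
    finally show "norm (T (Phi R (xs m)) - T (Phi R (xs n))) \<le> (\<bar>R\<bar> + 1) * norm (xs m - xs n)" .
  qed
  then obtain z where z: "(\<lambda>n. T (Phi R (xs n))) \<longlonglongrightarrow> z" using Cauchy_convergent_iff convergent_def by blast
  have cg: "Phi R x \<in> D \<and> T (Phi R x) = z"
    by (rule closed_graph[OF _ lP z]) (rule Phi_D(1)[OF R xsD])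
  thus "Phi R x \<in> D" by simp
  have "norm z \<le> \<bar>R\<bar> * norm x"
  proof (rule LIMSEQ_le[OF tendsto_norm[OF z]])
    show "(\<lambda>n. \<bar>R\<bar> * norm (xs n)) \<longlonglongrightarrow> \<bar>R\<bar> * norm x" by (intro tendsto_intros xs)
    show "\<exists>N. \<forall>n\<ge>N. norm (T (Phi R (xs n))) \<le> \<bar>R\<bar> * norm (xs n)"
      using Phi_D_bound[OF R xsD] by blast
  qed
  thus "norm (T (Phi R x)) \<le> \<bar>R\<bar> * norm x" using cg by simp
qed

lemma TPhi_facts:
  assumes R: "R \<noteq> 0"
  shows "bounded_linear (\<lambda>x. T (Phi R x))" "\<And>x. T (Phi R (J x)) = J (T (Phi R x))"
    "\<And>x y. inner (T (Phi R x)) y = inner x (T (Phi R y))"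
proof -
  interpret P: bounded_linear "Phi R" by (rule Phi_facts(1)[OF R])
  show bl: "bounded_linear (\<lambda>x. T (Phi R x))"
  proof (rule bounded_linear_intro[where K="\<bar>R\<bar>"])
    show "T (Phi R (x + y)) = T (Phi R x) + T (Phi R y)" for x y
      by (simp add: P.add T_add Phi_range(1)[OF R])
    show "T (Phi R (r *\<^sub>R x)) = r *\<^sub>R T (Phi R x)" for r x
      by (simp add: P.scale T_scale Phi_range(1)[OF R])
    show "norm (T (Phi R x)) \<le> norm x * \<bar>R\<bar>" for x using Phi_range(2)[OF R, of x] by (simp add: mult.commute)
  qed
  show "T (Phi R (J x)) = J (T (Phi R x))" for x
    by (simp add: Phi_facts(2)[OF R] T_J Phi_range(1)[OF R])
  show "inner (T (Phi R x)) y = inner x (T (Phi R y))" for x y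
  proof (rule dense_eq[OF dense, of "\<lambda>y. inner (T (Phi R x)) y" "\<lambda>y. inner x (T (Phi R y))"])
    show "bounded_linear (inner (T (Phi R x)))" by (rule bounded_linear_inner_right)
    show "bounded_linear (\<lambda>y. inner x (T (Phi R y)))"
      by (rule bounded_linear_compose[OF bounded_linear_inner_right bl])
    fix y assume y: "y \<in> D"
    have "inner (T (Phi R x)) y = inner (Phi R x) (T y)" by (rule sym[OF Phi_range(1)[OF R] y])
    also have "\<dots> = inner x (Phi R (T y))" by (rule Phi_facts(3)[OF R])
    also have "\<dots> = inner x (T (Phi R y))" by (simp add: Phi_D(2)[OF R y])
    finally show "inner (T (Phi R x)) y = inner x (T (Phi R y))" .
  qed
qed

lemma Phi_lim: "((\<lambda>R. Phi R x) \<longlongrightarrow> x) at_top"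
proof (rule tendstoI)
  fix e :: real assume e: "e > 0"
  have "x \<in> closure D" using dense by simp
  then obtain x' where x'D: "x' \<in> D" and x': "dist x' x < e / 3"
    using closure_approachable[of x D] e by (metis divide_pos_pos zero_less_numeral)
  define N where "N = max 1 (3 * norm (T x') / e + 1)"
  have "\<forall>R\<ge>N. dist (Phi R x) x < e"
  proof (intro allI impI)
    fix R assume RN: "N \<le> R"
    have R1: "R \<ge> 1" using RN by (simp add: N_def)
    hence R0: "R \<noteq> 0" and Rp: "R > 0" by auto
    interpret P: bounded_linear "Phi R" by (rule Phi_facts(1)[OF R0])
    have "x - Phi R x = ((x - x') - Phi R (x - x')) + (x' - Phi R x')" by (simp add: P.diff)
    hence "norm (x - Phi R x) \<le> norm ((x - x') - Phi R (x - x')) + norm (x' - Phi R x')"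
      by (metis norm_triangle_ineq)
    also have "norm ((x - x') - Phi R (x - x')) \<le> norm (x - x')"
      using Phi_facts(6)[OF R0, of "x - x'"] sqop.T_norm[OF sqop_TR[OF R0], of "x - x'"] by linarith
    also have "norm (x' - Phi R x') \<le> norm (T x') / R"
    proof -
      have "norm (x' - Phi R x') \<le> norm (TR R x')" by (rule Phi_facts(6)[OF R0])
      moreover have "R * norm (TR R x') \<le> norm (T x')" using TR_D_bound[OF R0 x'D] Rp by simp
      ultimately have "R * norm (x' - Phi R x') \<le> norm (T x')" using Rp
        by (meson mult_left_mono less_imp_le order_trans)
      thus ?thesis using Rp by (simp add: field_simps)
    qed
    also have "norm (T x') / R < e / 3"
    proof -
      have "3 * norm (T x') / e < R" using RN by (simp add: N_def)
      hence "3 * norm (T x') < R * e" using e by (simp add: field_simps)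
      thus ?thesis using Rp e by (simp add: field_simps)
    qed
    also have "norm (x - x') < e / 3" using x' by (simp add: dist_norm norm_minus_commute)
    finally have "norm (x - Phi R x) < e / 3 + e / 3" by simp
    hence "norm (x - Phi R x) < e" using e by simp
    thus "dist (Phi R x) x < e" by (simp add: dist_norm norm_minus_commute)
  qed
  thus "eventually (\<lambda>R. dist (Phi R x) x < e) at_top"
    unfolding eventually_at_top_linorder by blast
qed

lemma TPhi_lim:
  assumes x: "x \<in> D" shows "((\<lambda>R. T (Phi R x)) \<longlongrightarrow> T x) at_top"
proof -
  have ev: "eventually (\<lambda>R. Phi R (T x) = T (Phi R x)) at_top"
    unfolding eventually_at_top_linorder by (rule exI[of _ 1]) (simp add: Phi_D(2)[OF _ x])
  show ?thesis using Phi_lim[of "T x"] tendsto_cong[OF ev] by simp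
qed

end

lemma badj_props:
  fixes B :: "'b::{real_inner,complete_space} \<Rightarrow> 'a::{real_inner,complete_space}"
  assumes J1: "cs J1" and J0: "cs J0" and bl: "bounded_linear B" and BJ: "\<And>x. B (J1 x) = J0 (B x)"
  shows "radj B (badj J0 J1 B)" "bounded_linear (badj J0 J1 B)" "\<And>y. badj J0 J1 B (J0 y) = J1 (badj J0 J1 B y)"
proof -
  obtain B' where B': "radj B B'" "bounded_linear B'" using adj_exists[OF bl] by blast
  have e: "badj J0 J1 B = B'" by (rule ext) (rule badj_eq[OF J1 J0 bl BJ B'(1)])
  show "radj B (badj J0 J1 B)" "bounded_linear (badj J0 J1 B)" using B' e by auto
  show "\<And>y. badj J0 J1 B (J0 y) = J1 (badj J0 J1 B y)" unfolding e by (rule radj_J[OF J1 J0 bl BJ B'(1)])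
qed

lemma inner_J_B_self:
  assumes "cs J" "\<And>x y. inner (B x) y = inner x (B y)" "\<And>x. B (J x) = J (B x)"
  shows "inner a (J (B a)) = 0"
proof -
  interpret cs J by fact
  have "inner a (J (B a)) = - inner (J a) (B a)" by (simp add: inner_J_left)
  also have "\<dots> = - inner (B (J a)) a" by (simp add: assms(2) inner_commute)
  also have "\<dots> = - inner (J (B a)) a" by (simp add: assms(3))
  also have "\<dots> = - inner a (J (B a))" by (simp add: inner_commute)
  finally show ?thesis by simp
qed

locale main =
  HA: sa J0 DA A + HO: sa J1 DO Om
  for J0 :: "'a::{real_inner,complete_space} \<Rightarrow> 'a" and DA A
  and J1 :: "'b::{real_inner,complete_space} \<Rightarrow> 'b" and DO Om +
  fixes Gam :: "'b \<Rightarrow> 'a"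
  assumes Gam_add: "\<forall>\<phi>\<in>DO. \<forall>\<psi>\<in>DO. Gam (\<phi> + \<psi>) = Gam \<phi> + Gam \<psi>"
    and Gam_scale: "\<forall>\<phi>\<in>DO. \<forall>c. Gam (csc J1 c \<phi>) = csc J0 c (Gam \<phi>)"
    and Gam_bound: "\<exists>C. \<forall>\<phi>\<in>DO. (norm (Gam \<phi>))^2 \<le> C * (norm (Om \<phi> + J1 \<phi>))^2"
    and G_lim: "\<forall>v\<in>DA. \<exists>g. ((\<lambda>R. Gam (PhiR J1 DO Om R
                      (badj J0 J1 (\<lambda>x. Gam (resolv J1 DO Om 1 x)) v))) \<longlongrightarrow> g) at_top"
    and G_bound: "\<exists>\<delta><1. \<exists>\<beta>>0. \<forall>v\<in>DA.
         norm (Lim at_top (\<lambda>R. Gam (PhiR J1 DO Om R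
                      (badj J0 J1 (\<lambda>x. Gam (resolv J1 DO Om 1 x)) v))))
           \<le> \<delta> * norm (A v + \<beta> *\<^sub>R J0 v)"
begin

lemma Gam_plus: "\<phi> \<in> DO \<Longrightarrow> \<psi> \<in> DO \<Longrightarrow> Gam (\<phi> + \<psi>) = Gam \<phi> + Gam \<psi>"
  using Gam_add by blast

lemma Gam_sc: "\<phi> \<in> DO \<Longrightarrow> Gam (r *\<^sub>R \<phi>) = r *\<^sub>R Gam \<phi>"
  using Gam_scale[rule_format, of \<phi> "complex_of_real r"] by (simp add: HO.csc_real HA.csc_real)

lemma Gam_J: "\<phi> \<in> DO \<Longrightarrow> Gam (J1 \<phi>) = J0 (Gam \<phi>)"
  using Gam_scale[rule_format, of \<phi> "\<i>"] by (simp add: HO.csc_i HA.csc_i)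

lemma Gam_0: "Gam 0 = 0"
  using Gam_sc[OF HO.D_0(1), of 0] by simp

lemma Gam_minus: "\<phi> \<in> DO \<Longrightarrow> Gam (- \<phi>) = - Gam \<phi>"
  using Gam_sc[of \<phi> "-1"] by simp

lemma Gam_diff: "\<phi> \<in> DO \<Longrightarrow> \<psi> \<in> DO \<Longrightarrow> Gam (\<phi> - \<psi>) = Gam \<phi> - Gam \<psi>"
  using Gam_plus[of \<phi> "- \<psi>"] Gam_minus[of \<psi>] HO.mem_scale[of \<psi> "-1"] by simp

definition "Cg = sqrt \<bar>SOME C. \<forall>\<phi>\<in>DO. (norm (Gam \<phi>))^2 \<le> C * (norm (Om \<phi> + J1 \<phi>))^2\<bar> + 1"

lemma Cg_pos: "Cg > 0"
proof -
  have "0 \<le> sqrt \<bar>SOME C. \<forall>\<phi>\<in>DO. (norm (Gam \<phi>))^2 \<le> C * (norm (Om \<phi> + J1 \<phi>))^2\<bar>" by simp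
  thus ?thesis unfolding Cg_def by linarith
qed

lemma Gam_norm: "\<phi> \<in> DO \<Longrightarrow> norm (Gam \<phi>) \<le> Cg * norm (Om \<phi> + J1 \<phi>)"
proof -
  assume p: "\<phi> \<in> DO"
  define C where "C = (SOME C. \<forall>\<phi>\<in>DO. (norm (Gam \<phi>))^2 \<le> C * (norm (Om \<phi> + J1 \<phi>))^2)"
  have C: "\<forall>\<phi>\<in>DO. (norm (Gam \<phi>))^2 \<le> C * (norm (Om \<phi> + J1 \<phi>))^2"
    unfolding C_def by (rule someI_ex[OF Gam_bound])
  have "(norm (Gam \<phi>))^2 \<le> \<bar>C\<bar> * (norm (Om \<phi> + J1 \<phi>))^2"
    using C p abs_ge_self[of C] mult_right_mono[of C "\<bar>C\<bar>" "(norm (Om \<phi> + J1 \<phi>))^2"] by force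
  hence "norm (Gam \<phi>) \<le> sqrt (\<bar>C\<bar> * (norm (Om \<phi> + J1 \<phi>))^2)" by (simp add: real_le_rsqrt)
  also have "\<dots> = sqrt \<bar>C\<bar> * norm (Om \<phi> + J1 \<phi>)" by (simp add: real_sqrt_mult)
  also have "\<dots> \<le> Cg * norm (Om \<phi> + J1 \<phi>)" unfolding Cg_def C_def[symmetric]
    by (intro mult_right_mono) auto
  finally show ?thesis .
qed

definition S :: "'b \<Rightarrow> 'a" where "S x = Gam (HO.res 1 x)"

lemma S_Gam: "\<phi> \<in> DO \<Longrightarrow> Gam \<phi> = S (Om \<phi> + J1 \<phi>)"
  unfolding S_def using HO.res_eq[of 1 \<phi> "Om \<phi> + J1 \<phi>"] by simp

lemma S_bl: "bounded_linear S"
proof (rule bounded_linear_intro[where K=Cg])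
  have r1: "(1::real) \<noteq> 0" by simp
  interpret R: bounded_linear "HO.res 1" by (rule HO.res_bl[OF r1])
  show "S (x + y) = S x + S y" for x y
    unfolding S_def by (simp add: R.add Gam_plus HO.res(1)[OF r1])
  show "S (r *\<^sub>R x) = r *\<^sub>R S x" for r x
    unfolding S_def by (simp add: R.scale Gam_sc HO.res(1)[OF r1])
  show "norm (S x) \<le> norm x * Cg" for x
    unfolding S_def using Gam_norm[OF HO.res(1)[OF r1, of x]] HO.res(2)[OF r1, of x]
    by (simp add: mult.commute)
qed

lemma S_J: "S (J1 x) = J0 (S x)"
  unfolding S_def using HO.res_J[of 1 x] Gam_J[OF HO.res(1)] by simp

definition Sd :: "'a \<Rightarrow> 'b" where "Sd = badj J0 J1 S"

lemma Sd_props: "radj S Sd" "bounded_linear Sd" "\<And>y. Sd (J0 y) = J1 (Sd y)"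
  unfolding Sd_def using badj_props[OF HO.cs_axioms HA.cs_axioms S_bl S_J] by auto

lemma S_adj: "inner (S x) y = inner x (Sd y)"
  using Sd_props(1) by (simp add: radj_def)

lemma Sd_eq: "badj J0 J1 (\<lambda>x. Gam (resolv J1 DO Om 1 x)) = Sd"
  unfolding Sd_def S_def[abs_def] HO.res_def ..

definition GP :: "real \<Rightarrow> 'b \<Rightarrow> 'a" where "GP R w = Gam (HO.Phi R w)"

lemma PhiR_Phi: "R > 0 \<Longrightarrow> PhiR J1 DO Om R = HO.Phi R"
  by (rule HO.PhiR_eq)

lemma GP_eq: "R \<noteq> 0 \<Longrightarrow> GP R w = S (Om (HO.Phi R w) + J1 (HO.Phi R w))"
  unfolding GP_def by (rule S_Gam[OF HO.Phi_range(1)])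

lemma OJPhi_bl: "R \<noteq> 0 \<Longrightarrow> bounded_linear (\<lambda>w. Om (HO.Phi R w) + J1 (HO.Phi R w))"
  by (rule bounded_linear_add[OF HO.TPhi_facts(1) bounded_linear_compose[OF HO.bl HO.Phi_facts(1)]])

lemma GP_bl: assumes R: "R \<noteq> 0" shows "bounded_linear (GP R)"
proof -
  have "GP R = (\<lambda>w. S (Om (HO.Phi R w) + J1 (HO.Phi R w)))" by (rule ext) (rule GP_eq[OF R])
  thus ?thesis using bounded_linear_compose[OF S_bl OJPhi_bl[OF R]] by simp
qed

lemma GP_J: "R \<noteq> 0 \<Longrightarrow> GP R (J1 w) = J0 (GP R w)"
  unfolding GP_def by (simp add: HO.Phi_facts(2) Gam_J HO.Phi_range(1))

definition adjGP :: "real \<Rightarrow> 'a \<Rightarrow> 'b" where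
  "adjGP R v = Om (HO.Phi R (Sd v)) - J1 (HO.Phi R (Sd v))"

lemma GP_radj: assumes R: "R \<noteq> 0" shows "radj (GP R) (adjGP R)"
  unfolding radj_def
proof (intro allI)
  fix w v
  have "inner (GP R w) v = inner (Om (HO.Phi R w) + J1 (HO.Phi R w)) (Sd v)"
    by (simp add: GP_eq[OF R] S_adj)
  also have "\<dots> = inner (Om (HO.Phi R w)) (Sd v) + inner (J1 (HO.Phi R w)) (Sd v)"
    by (simp add: inner_add_left)
  also have "inner (Om (HO.Phi R w)) (Sd v) = inner w (Om (HO.Phi R (Sd v)))"
    by (rule HO.TPhi_facts(3)[OF R])
  also have "inner (J1 (HO.Phi R w)) (Sd v) = - inner w (J1 (HO.Phi R (Sd v)))"
  proof -
    have "inner (J1 (HO.Phi R w)) (Sd v) = - inner (HO.Phi R w) (J1 (Sd v))" by (rule HO.inner_J_left)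
    also have "\<dots> = - inner w (HO.Phi R (J1 (Sd v)))" by (simp add: HO.Phi_facts(3)[OF R])
    also have "\<dots> = - inner w (J1 (HO.Phi R (Sd v)))" by (simp add: HO.Phi_facts(2)[OF R])
    finally show ?thesis .
  qed
  finally show "inner (GP R w) v = inner w (adjGP R v)"
    by (simp add: adjGP_def inner_diff_right)
qed

lemma badj_GP: "R \<noteq> 0 \<Longrightarrow> badj J0 J1 (GP R) v = adjGP R v"
  by (rule badj_eq[OF HO.cs_axioms HA.cs_axioms GP_bl GP_J GP_radj])

definition G :: "'a \<Rightarrow> 'a" where
  "G v = Lim at_top (\<lambda>R. Gam (PhiR J1 DO Om R (Sd v)))"

lemma ev_pos: "eventually (\<lambda>R::real. R > 0) at_top"
  by (rule eventually_gt_at_top)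

lemma G_tendsto: assumes v: "v \<in> DA" shows "((\<lambda>R. GP R (Sd v)) \<longlongrightarrow> G v) at_top"
proof -
  obtain g where g: "((\<lambda>R. Gam (PhiR J1 DO Om R (Sd v))) \<longlongrightarrow> g) at_top"
    using G_lim v unfolding Sd_eq by blast
  have Gv: "G v = g" unfolding G_def by (rule tendsto_Lim[OF trivial_limit_at_top_linorder g])
  have ev: "eventually (\<lambda>R. Gam (PhiR J1 DO Om R (Sd v)) = GP R (Sd v)) at_top"
    using ev_pos by eventually_elim (simp add: PhiR_Phi GP_def)
  show ?thesis using g tendsto_cong[OF ev] Gv by simp
qed

lemma G_bound': "\<exists>\<delta><1. \<exists>\<beta>>0. \<forall>v\<in>DA. norm (G v) \<le> \<delta> * norm (A v + \<beta> *\<^sub>R J0 v)"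
  using G_bound unfolding Sd_eq G_def .

end

lemma bl_add: "bounded_linear f \<Longrightarrow> f (x + y) = f x + f y"
  using linear_add[OF bounded_linear.linear] by blast
lemma bl_scale: "bounded_linear f \<Longrightarrow> f (r *\<^sub>R x) = r *\<^sub>R f x"
  using linear_scale[OF bounded_linear.linear] by blast
lemma bl_diff: "bounded_linear f \<Longrightarrow> f (x - y) = f x - f y"
  using linear_diff[OF bounded_linear.linear] by blast

context main begin

lemma ev_ne: "eventually (\<lambda>R::real. R \<noteq> 0) at_top"
  using ev_pos by eventually_elim simp

lemma lim_uniq: "((f::real \<Rightarrow> 'c::t2_space) \<longlongrightarrow> a) at_top \<Longrightarrow> (f \<longlongrightarrow> b) at_top \<Longrightarrow> a = b"
  by (rule tendsto_unique[OF trivial_limit_at_top_linorder])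

lemma tendsto_ev:
  assumes "((f::real \<Rightarrow> 'c::topological_space) \<longlongrightarrow> a) at_top" "eventually (\<lambda>R. f R = g R) at_top"
  shows "(g \<longlongrightarrow> a) at_top"
  using assms tendsto_cong by blast

lemma Sd_add: "Sd (u + v) = Sd u + Sd v" using bl_add[OF Sd_props(2)] by blast
lemma Sd_scale: "Sd (r *\<^sub>R u) = r *\<^sub>R Sd u" using bl_scale[OF Sd_props(2)] by blast
lemma Sd_diff: "Sd (u - v) = Sd u - Sd v" using bl_diff[OF Sd_props(2)] by blast

lemma G_add: assumes u: "u \<in> DA" and v: "v \<in> DA" shows "G (u + v) = G u + G v"
proof -
  have l1: "((\<lambda>R. GP R (Sd (u + v))) \<longlongrightarrow> G (u + v)) at_top" by (rule G_tendsto[OF HA.mem_add[OF u v]])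
  have l2: "((\<lambda>R. GP R (Sd u) + GP R (Sd v)) \<longlongrightarrow> G u + G v) at_top"
    by (rule tendsto_add[OF G_tendsto[OF u] G_tendsto[OF v]])
  have ev: "eventually (\<lambda>R. GP R (Sd u) + GP R (Sd v) = GP R (Sd (u + v))) at_top"
    using ev_ne by eventually_elim (simp add: Sd_add bl_add[OF GP_bl])
  show ?thesis using lim_uniq[OF l1 tendsto_ev[OF l2 ev]] .
qed

lemma G_scale: assumes v: "v \<in> DA" shows "G (r *\<^sub>R v) = r *\<^sub>R G v"
proof -
  have l1: "((\<lambda>R. GP R (Sd (r *\<^sub>R v))) \<longlongrightarrow> G (r *\<^sub>R v)) at_top" by (rule G_tendsto[OF HA.mem_scale[OF v]])
  have l2: "((\<lambda>R. r *\<^sub>R GP R (Sd v)) \<longlongrightarrow> r *\<^sub>R G v) at_top"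
    by (rule tendsto_scaleR[OF tendsto_const G_tendsto[OF v]])
  have ev: "eventually (\<lambda>R. r *\<^sub>R GP R (Sd v) = GP R (Sd (r *\<^sub>R v))) at_top"
    using ev_ne by eventually_elim (simp add: Sd_scale bl_scale[OF GP_bl])
  show ?thesis using lim_uniq[OF l1 tendsto_ev[OF l2 ev]] .
qed

lemma G_diff: assumes u: "u \<in> DA" and v: "v \<in> DA" shows "G (u - v) = G u - G v"
  using G_add[OF u HA.mem_scale[OF v, of "-1"]] G_scale[OF v, of "-1"] by simp

lemma G_J: assumes v: "v \<in> DA" shows "G (J0 v) = J0 (G v)"
proof -
  have l1: "((\<lambda>R. GP R (Sd (J0 v))) \<longlongrightarrow> G (J0 v)) at_top" by (rule G_tendsto[OF HA.mem_J[OF v]])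
  have l2: "((\<lambda>R. J0 (GP R (Sd v))) \<longlongrightarrow> J0 (G v)) at_top"
    by (rule HA.tendsto[OF G_tendsto[OF v]])
  have ev: "eventually (\<lambda>R. J0 (GP R (Sd v)) = GP R (Sd (J0 v))) at_top"
    using ev_ne by eventually_elim (simp add: Sd_props(3) GP_J)
  show ?thesis using lim_uniq[OF l1 tendsto_ev[OF l2 ev]] .
qed

lemma GP_lim: assumes p: "\<phi> \<in> DO" shows "((\<lambda>R. GP R \<phi>) \<longlongrightarrow> Gam \<phi>) at_top"
proof -
  have b: "eventually (\<lambda>R. norm (GP R \<phi> - Gam \<phi>) \<le>
      Cg * (norm (Om (HO.Phi R \<phi>) - Om \<phi>) + norm (HO.Phi R \<phi> - \<phi>))) at_top"
    using ev_ne
  proof eventually_elim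
    case (elim R)
    have PD: "HO.Phi R \<phi> \<in> DO" by (rule HO.Phi_range(1)[OF elim])
    have "GP R \<phi> - Gam \<phi> = Gam (HO.Phi R \<phi> - \<phi>)" unfolding GP_def by (rule Gam_diff[OF PD p, symmetric])
    hence "norm (GP R \<phi> - Gam \<phi>) \<le> Cg * norm (Om (HO.Phi R \<phi> - \<phi>) + J1 (HO.Phi R \<phi> - \<phi>))"
      using Gam_norm[OF HO.mem_diff[OF PD p]] by simp
    also have "Om (HO.Phi R \<phi> - \<phi>) = Om (HO.Phi R \<phi>) - Om \<phi>" by (rule HO.T_diff[OF PD p])
    also have "norm (Om (HO.Phi R \<phi>) - Om \<phi> + J1 (HO.Phi R \<phi> - \<phi>)) \<le> norm (Om (HO.Phi R \<phi>) - Om \<phi>) + norm (HO.Phi R \<phi> - \<phi>)"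
    proof -
      have n1: "norm (Om (HO.Phi R \<phi>) - Om \<phi> + J1 (HO.Phi R \<phi> - \<phi>)) \<le> norm (Om (HO.Phi R \<phi>) - Om \<phi>) + norm (J1 (HO.Phi R \<phi> - \<phi>))"
        by (rule norm_triangle_ineq)
      have n2: "norm (J1 (HO.Phi R \<phi> - \<phi>)) = norm (HO.Phi R \<phi> - \<phi>)" by (rule HO.norm_J)
      from n1 n2 show ?thesis by linarith
    qed
    finally show ?case using Cg_pos by (simp add: mult_left_mono)
  qed
  have "((\<lambda>R. Cg * (norm (Om (HO.Phi R \<phi>) - Om \<phi>) + norm (HO.Phi R \<phi> - \<phi>))) \<longlongrightarrow> Cg * (norm (Om \<phi> - Om \<phi>) + norm (\<phi> - \<phi>))) at_top"
    by (intro tendsto_intros HO.TPhi_lim[OF p] HO.Phi_lim)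
  hence "((\<lambda>R. Cg * (norm (Om (HO.Phi R \<phi>) - Om \<phi>) + norm (HO.Phi R \<phi> - \<phi>))) \<longlongrightarrow> 0) at_top" by simp
  from Lim_null_comparison[OF b this] show ?thesis by (rule LIM_zero_cancel)
qed

definition DD :: "('a \<times> 'b) set" where "DD = {(v, \<phi> - Sd v) | v \<phi>. v \<in> DA \<and> \<phi> \<in> DO}"

lemma DD_iff: "p \<in> DD \<longleftrightarrow> fst p \<in> DA \<and> snd p + Sd (fst p) \<in> DO"
proof
  assume "p \<in> DD" thus "fst p \<in> DA \<and> snd p + Sd (fst p) \<in> DO" unfolding DD_def by auto
next
  assume h: "fst p \<in> DA \<and> snd p + Sd (fst p) \<in> DO"
  have "p = (fst p, (snd p + Sd (fst p)) - Sd (fst p))" by simp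
  thus "p \<in> DD" unfolding DD_def using h by blast
qed

definition Aop :: "'a \<times> 'b \<Rightarrow> 'a \<times> 'b" where
  "Aop p = (A (fst p) + Gam (snd p + Sd (fst p)) - G (fst p), Om (snd p + Sd (fst p)) - J1 (Sd (fst p)))"

lemma Aop_rep: "Aop (v, \<phi> - Sd v) = (A v + Gam \<phi> - G v, Om \<phi> - J1 (Sd v))"
  by (simp add: Aop_def)

definition fD :: "'a \<times> 'b \<Rightarrow> real \<Rightarrow> 'a \<times> 'b" where
  "fD = (\<lambda>(v, w) R. (A v + Gam (PhiR J1 DO Om R w),
                  badj J0 J1 (\<lambda>x. Gam (PhiR J1 DO Om R x)) v + Om (PhiR J1 DO Om R w)))"

lemma fD_lim: assumes v: "v \<in> DA" and p: "\<phi> \<in> DO"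
  shows "(fD (v, \<phi> - Sd v) \<longlongrightarrow> Aop (v, \<phi> - Sd v)) at_top"
proof -
  define g where "g R = (A v + GP R \<phi> - GP R (Sd v), Om (HO.Phi R \<phi>) - J1 (HO.Phi R (Sd v)))" for R
  have lg: "(g \<longlongrightarrow> Aop (v, \<phi> - Sd v)) at_top" unfolding Aop_rep g_def
    by (intro tendsto_Pair tendsto_diff tendsto_add tendsto_const GP_lim[OF p] G_tendsto[OF v]
        HO.TPhi_lim[OF p] HO.tendsto[OF HO.Phi_lim])
  have ev: "eventually (\<lambda>R. g R = fD (v, \<phi> - Sd v) R) at_top"
    using ev_pos
  proof eventually_elim
    case (elim R)
    hence R0: "R \<noteq> 0" by simp
    have e1: "(\<lambda>x. Gam (PhiR J1 DO Om R x)) = GP R" by (rule ext) (simp add: PhiR_Phi[OF elim] GP_def)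
    have e2: "GP R (\<phi> - Sd v) = GP R \<phi> - GP R (Sd v)" by (rule bl_diff[OF GP_bl[OF R0]])
    have e3: "Om (HO.Phi R (\<phi> - Sd v)) = Om (HO.Phi R \<phi>) - Om (HO.Phi R (Sd v))"
      by (rule bl_diff[OF HO.TPhi_facts(1)[OF R0]])
    show ?case unfolding fD_def g_def using e2 e3
      by (simp add: e1 PhiR_Phi[OF elim] badj_GP[OF R0] adjGP_def GP_def[symmetric] algebra_simps)
  qed
  show ?thesis by (rule tendsto_ev[OF lg ev])
qed

lemma fD_Lim: assumes "p \<in> DD" shows "(fD p \<longlongrightarrow> Aop p) at_top" "Lim at_top (fD p) = Aop p"
proof -
  obtain v \<phi> where p: "p = (v, \<phi> - Sd v)" "v \<in> DA" "\<phi> \<in> DO" using assms unfolding DD_def by blast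
  show l: "(fD p \<longlongrightarrow> Aop p) at_top" unfolding p(1) by (rule fD_lim[OF p(2,3)])
  show "Lim at_top (fD p) = Aop p" by (rule tendsto_Lim[OF trivial_limit_at_top_linorder l])
qed

lemma OmSd: assumes p: "\<phi> \<in> DO" shows "inner (Om \<phi>) (Sd u) = inner (Gam \<phi>) u + inner \<phi> (J1 (Sd u))"
proof -
  have r1: "(1::real) \<noteq> 0" by simp
  define r where "r = HO.res 1 \<phi>"
  have r: "r \<in> DO" "Om r + J1 r = \<phi>" using HO.res[OF r1, of \<phi>] by (auto simp: r_def)
  have JrD: "J1 r \<in> DO" by (rule HO.mem_J[OF r(1)])
  have "HO.res 1 (Om \<phi>) = \<phi> - J1 r"
  proof (rule HO.res_eq[OF r1])
    show "\<phi> - J1 r \<in> DO" by (rule HO.mem_diff[OF p JrD])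
    have "Om r = \<phi> - J1 r" using r(2) by (simp add: eq_diff_eq)
    hence "J1 (Om r) = J1 \<phi> + r" by simp
    hence "Om (\<phi> - J1 r) + 1 *\<^sub>R J1 (\<phi> - J1 r) = Om \<phi> - (J1 \<phi> + r) + J1 \<phi> + r"
      by (simp add: HO.T_diff[OF p JrD] HO.T_J[OF r(1)])
    thus "Om (\<phi> - J1 r) + 1 *\<^sub>R J1 (\<phi> - J1 r) = Om \<phi>" by simp
  qed
  hence "S (Om \<phi>) = Gam (\<phi> - J1 r)" unfolding S_def by simp
  also have "\<dots> = Gam \<phi> - J0 (Gam r)" by (simp add: Gam_diff[OF p JrD] Gam_J[OF r(1)])
  also have "Gam r = S \<phi>" by (simp add: S_def r_def)
  finally have "S (Om \<phi>) = Gam \<phi> - J0 (S \<phi>)" .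
  hence "inner (Om \<phi>) (Sd u) = inner (Gam \<phi> - J0 (S \<phi>)) u" by (simp add: S_adj[symmetric])
  also have "\<dots> = inner (Gam \<phi>) u + inner (S \<phi>) (J0 u)" by (simp add: inner_diff_left HA.inner_J_left)
  also have "inner (S \<phi>) (J0 u) = inner \<phi> (J1 (Sd u))" by (simp add: S_adj Sd_props(3))
  finally show ?thesis .
qed

lemma Gskew: assumes v: "v \<in> DA" and u: "u \<in> DA"
  shows "inner (G v) u - inner v (G u) = 2 * inner (J1 (Sd v)) (Sd u)"
proof -
  define a where "a = Sd v"
  define b where "b = Sd u"
  have l1: "((\<lambda>R. inner (GP R a) u - inner v (GP R b)) \<longlongrightarrow> inner (G v) u - inner v (G u)) at_top"
    unfolding a_def b_def by (intro tendsto_intros G_tendsto[OF v] G_tendsto[OF u])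
  have l2: "((\<lambda>R. 2 * inner (J1 (HO.Phi R a)) b) \<longlongrightarrow> 2 * inner (J1 a) b) at_top"
    by (intro tendsto_intros HO.tendsto HO.Phi_lim)
  have ev: "eventually (\<lambda>R. 2 * inner (J1 (HO.Phi R a)) b = inner (GP R a) u - inner v (GP R b)) at_top"
    using ev_ne
  proof eventually_elim
    case (elim R)
    have r1: "inner (GP R a) u = inner a (Om (HO.Phi R b)) - inner a (J1 (HO.Phi R b))"
      using GP_radj[OF elim] by (simp add: radj_def adjGP_def inner_diff_right b_def)
    have r2: "inner v (GP R b) = inner b (Om (HO.Phi R a)) - inner b (J1 (HO.Phi R a))"
      using GP_radj[OF elim] by (simp add: radj_def adjGP_def inner_diff_right a_def inner_commute)
    have r3: "inner a (Om (HO.Phi R b)) = inner b (Om (HO.Phi R a))"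
      using HO.TPhi_facts(3)[OF elim, of a b] by (simp add: inner_commute)
    have r4: "inner a (J1 (HO.Phi R b)) = - inner (J1 (HO.Phi R a)) b"
    proof -
      have "inner a (J1 (HO.Phi R b)) = - inner (J1 a) (HO.Phi R b)" by (simp add: HO.inner_J_left)
      also have "\<dots> = - inner (HO.Phi R (J1 a)) b" by (simp add: HO.Phi_facts(3)[OF elim])
      also have "\<dots> = - inner (J1 (HO.Phi R a)) b" by (simp add: HO.Phi_facts(2)[OF elim])
      finally show ?thesis .
    qed
    show ?case unfolding r1 r2 r3 r4 by (simp add: inner_commute)
  qed
  show ?thesis using lim_uniq[OF l1 tendsto_ev[OF l2 ev]] by (simp add: a_def b_def)
qed

lemma Aop_sym: assumes p1: "p1 \<in> DD" and p2: "p2 \<in> DD" shows "inner (Aop p1) p2 = inner p1 (Aop p2)"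
proof -
  obtain v \<phi> where P1: "p1 = (v, \<phi> - Sd v)" "v \<in> DA" "\<phi> \<in> DO" using p1 unfolding DD_def by blast
  obtain u \<psi> where P2: "p2 = (u, \<psi> - Sd u)" "u \<in> DA" "\<psi> \<in> DO" using p2 unfolding DD_def by blast
  have a1: "inner (A v) u = inner v (A u)" by (rule HA.sym[OF P1(2) P2(2)])
  have a2: "inner (Om \<phi>) \<psi> = inner \<phi> (Om \<psi>)" by (rule HO.sym[OF P1(3) P2(3)])
  have o1: "inner (Om \<phi>) (Sd u) = inner (Gam \<phi>) u + inner \<phi> (J1 (Sd u))" by (rule OmSd[OF P1(3)])
  have o2: "inner (Om \<psi>) (Sd v) = inner (Gam \<psi>) v + inner \<psi> (J1 (Sd v))" by (rule OmSd[OF P2(3)])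
  have gs: "inner (G v) u - inner v (G u) = 2 * inner (J1 (Sd v)) (Sd u)" by (rule Gskew[OF P1(2) P2(2)])
  have jj: "inner (Sd v) (J1 (Sd u)) = - inner (J1 (Sd v)) (Sd u)" by (simp add: HO.inner_J_left)
  have jj2: "inner (J1 (Sd v)) \<psi> = inner \<psi> (J1 (Sd v))" by (simp add: inner_commute)
  have "inner (Aop p1) p2 = inner (A v) u + inner (Gam \<phi>) u - inner (G v) u
        + inner (Om \<phi>) \<psi> - inner (Om \<phi>) (Sd u) - inner (J1 (Sd v)) \<psi> + inner (J1 (Sd v)) (Sd u)"
    unfolding P1(1) P2(1) Aop_rep by (simp add: inner_Pair inner_add_left inner_diff_left inner_diff_right)
  moreover have "inner p1 (Aop p2) = inner v (A u) + inner (Gam \<psi>) v - inner v (G u)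
        + inner \<phi> (Om \<psi>) - inner \<phi> (J1 (Sd u)) - inner (Om \<psi>) (Sd v) + inner (Sd v) (J1 (Sd u))"
    unfolding P1(1) P2(1) Aop_rep
    by (simp add: inner_Pair inner_add_right inner_diff_left inner_diff_right inner_commute)
  ultimately show ?thesis using a1 a2 o1 o2 gs jj jj2 by (simp add: inner_commute)
qed

end

context main begin

lemma G_J_inner: assumes v: "v \<in> DA" shows "inner (G v) (J0 v) = inner (Sd v) (Sd v)"
proof -
  define a where "a = Sd v"
  have l1: "((\<lambda>R. inner (GP R a) (J0 v)) \<longlongrightarrow> inner (G v) (J0 v)) at_top"
    unfolding a_def by (intro tendsto_intros G_tendsto[OF v])
  have l2: "((\<lambda>R. inner a (HO.Phi R a)) \<longlongrightarrow> inner a a) at_top"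
    by (intro tendsto_intros HO.Phi_lim)
  have ev: "eventually (\<lambda>R. inner a (HO.Phi R a) = inner (GP R a) (J0 v)) at_top"
    using ev_ne
  proof eventually_elim
    case (elim R)
    have "inner (GP R a) (J0 v) = inner a (adjGP R (J0 v))" using GP_radj[OF elim] by (simp add: radj_def)
    also have "adjGP R (J0 v) = J1 (Om (HO.Phi R a)) + HO.Phi R a"
      by (simp add: adjGP_def Sd_props(3) a_def[symmetric] HO.Phi_facts(2)[OF elim] HO.T_J[OF HO.Phi_range(1)[OF elim]])
    also have "inner a (J1 (Om (HO.Phi R a)) + HO.Phi R a) = inner a (HO.Phi R a)"
      using inner_J_B_self[OF HO.cs_axioms HO.TPhi_facts(3)[OF elim] HO.TPhi_facts(2)[OF elim], of a]
      by (simp add: inner_add_right)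
    finally show ?case by simp
  qed
  show ?thesis using lim_uniq[OF l1 tendsto_ev[OF l2 ev]] by (simp add: a_def)
qed

definition Rm :: "real \<Rightarrow> 'b \<Rightarrow> 'b" where "Rm m y = y + (1 - m) *\<^sub>R J1 (HO.res m y)"

lemma Rm_eq: "m \<noteq> 0 \<Longrightarrow> Rm m y = Om (HO.res m y) + J1 (HO.res m y)"
  using HO.res(2)[of m y] by (simp add: Rm_def algebra_simps)

lemma Rm_bl: "m \<noteq> 0 \<Longrightarrow> bounded_linear (Rm m)"
  unfolding Rm_def[abs_def]
  by (rule bounded_linear_add[OF bounded_linear_ident bounded_linear_compose[OF bounded_linear_scaleR_right
        bounded_linear_compose[OF HO.bl HO.res_bl]]])

lemma Gam_res: "m \<noteq> 0 \<Longrightarrow> Gam (HO.res m y) = S (Rm m y)"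
  using S_Gam[OF HO.res(1)] Rm_eq by simp

definition Bm :: "real \<Rightarrow> 'a \<Rightarrow> 'a" where "Bm m v = (1 + m) *\<^sub>R Gam (HO.res m (J1 (Sd v)))"

lemma Bm_bl: assumes m: "m \<noteq> 0" shows "bounded_linear (Bm m)"
proof -
  have "Bm m = (\<lambda>v. (1 + m) *\<^sub>R S (Rm m (J1 (Sd v))))" by (rule ext) (simp add: Bm_def Gam_res[OF m])
  moreover have "bounded_linear (\<lambda>v. (1 + m) *\<^sub>R S (Rm m (J1 (Sd v))))"
    by (rule bounded_linear_compose[OF bounded_linear_scaleR_right bounded_linear_compose[OF S_bl
          bounded_linear_compose[OF Rm_bl[OF m] bounded_linear_compose[OF HO.bl Sd_props(2)]]]])
  ultimately show ?thesis by simp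
qed

lemma Bm_inner:
  assumes m: "m \<noteq> 0" and v: "v \<in> DA"
  defines "b \<equiv> HO.res m (J1 (Sd v))"
  shows "inner (Bm m v) (J0 v) = (1 + m) * (inner (Om b) (Om b) + m * inner b b)"
    "inner (Sd v) (Sd v) = inner (Om b) (Om b) + m^2 * inner b b"
proof -
  have b: "b \<in> DO" "Om b + m *\<^sub>R J1 b = J1 (Sd v)" using HO.res[OF m] by (auto simp: b_def)
  have o: "inner (Om b) (J1 b) = 0" by (rule HO.inner_T_J[OF b(1)])
  have "inner (Bm m v) (J0 v) = (1 + m) * inner (S (Om b + J1 b)) (J0 v)"
    by (simp add: Bm_def b_def[symmetric] S_Gam[OF b(1)])
  also have "inner (S (Om b + J1 b)) (J0 v) = inner (Om b + J1 b) (J1 (Sd v))" by (simp add: S_adj Sd_props(3))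
  also have "\<dots> = inner (Om b + J1 b) (Om b + m *\<^sub>R J1 b)" by (simp add: b(2))
  also have "\<dots> = inner (Om b) (Om b) + m * inner b b" using o
    by (simp add: inner_add_left inner_add_right inner_commute)
  finally show "inner (Bm m v) (J0 v) = (1 + m) * (inner (Om b) (Om b) + m * inner b b)" .
  have "inner (Sd v) (Sd v) = norm (J1 (Sd v))^2" by (simp add: power2_norm_eq_inner)
  also have "\<dots> = norm (Om b)^2 + m^2 * norm b^2" unfolding b(2)[symmetric] by (rule HO.norm_id[OF b(1)])
  finally show "inner (Sd v) (Sd v) = inner (Om b) (Om b) + m^2 * inner b b" by (simp add: power2_norm_eq_inner)
qed

definition Gm :: "real \<Rightarrow> 'a \<Rightarrow> 'a" where "Gm m v = G v - Bm m v"

lemma Gm_diss: assumes m: "m \<noteq> 0" and v: "v \<in> DA" shows "m * inner (Gm m v) (J0 v) \<le> 0"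
proof -
  define b where "b = HO.res m (J1 (Sd v))"
  have "inner (Gm m v) (J0 v) = inner (Sd v) (Sd v) - inner (Bm m v) (J0 v)"
    by (simp add: Gm_def inner_diff_left G_J_inner[OF v])
  also have "\<dots> = - m * (inner (Om b) (Om b) + inner b b)"
    unfolding Bm_inner[OF m v] b_def[symmetric] by (simp add: algebra_simps power2_eq_square)
  finally have "m * inner (Gm m v) (J0 v) = - (m * m) * (inner (Om b) (Om b) + inner b b)" by simp
  also have "\<dots> \<le> 0" by (simp add: mult_nonneg_nonneg)
  finally show ?thesis .
qed

lemma Gm_diff: "m \<noteq> 0 \<Longrightarrow> u \<in> DA \<Longrightarrow> v \<in> DA \<Longrightarrow> Gm m (u - v) = Gm m u - Gm m v"
  by (simp add: Gm_def G_diff bl_diff[OF Bm_bl])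

end

locale main2 = main +
  fixes dl bt m :: real
  assumes dl: "dl < 1" and bt: "bt > 0"
    and Gb: "\<forall>v\<in>DA. norm (G v) \<le> dl * norm (A v + bt *\<^sub>R J0 v)"
    and mm: "m = bt \<or> m = - bt"
begin

lemma m0: "m \<noteq> 0" using mm bt by auto
lemma absm: "\<bar>m\<bar> = bt" using mm bt by auto
lemma msq: "m^2 = bt^2" using mm by auto

definition "d' = max dl 0"
lemma d'0: "0 \<le> d'" and d'1: "d' < 1" using dl by (auto simp: d'_def)

lemma Gb': assumes v: "v \<in> DA" shows "norm (G v) \<le> d' * norm (A v + m *\<^sub>R J0 v)"
proof -
  have "norm (A v + bt *\<^sub>R J0 v)^2 = norm (A v + m *\<^sub>R J0 v)^2"
    using HA.norm_id[OF v, of bt] HA.norm_id[OF v, of m] msq by simp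
  hence e: "norm (A v + bt *\<^sub>R J0 v) = norm (A v + m *\<^sub>R J0 v)" by (simp add: power2_eq_iff_nonneg)
  have "dl * norm (A v + m *\<^sub>R J0 v) \<le> d' * norm (A v + m *\<^sub>R J0 v)"
    by (rule mult_right_mono) (auto simp: d'_def)
  thus ?thesis using Gb v e by auto
qed

definition "cB = (SOME K. K > 0 \<and> (\<forall>v. norm (Bm m v) \<le> norm v * K))"
lemma cB: "cB > 0" "norm (Bm m v) \<le> norm v * cB"
proof -
  have "\<exists>K. K > 0 \<and> (\<forall>v. norm (Bm m v) \<le> norm v * K)"
    using bounded_linear.pos_bounded[OF Bm_bl[OF m0]] by blast
  hence "cB > 0 \<and> (\<forall>v. norm (Bm m v) \<le> norm v * cB)" unfolding cB_def by (rule someI_ex)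
  thus "cB > 0" "norm (Bm m v) \<le> norm v * cB" by auto
qed

definition L :: "real \<Rightarrow> 'a \<Rightarrow> 'a" where "L t v = A v + m *\<^sub>R J0 v - t *\<^sub>R Gm m v"

lemma L_diff: "u \<in> DA \<Longrightarrow> v \<in> DA \<Longrightarrow> L t (u - v) = L t u - L t v"
  by (simp add: L_def HA.T_diff Gm_diff[OF m0] algebra_simps)

lemma lower: assumes v: "v \<in> DA" and t: "0 \<le> t" shows "bt * norm v \<le> norm (L t v)"
proof -
  have i0: "inner (A v) (J0 v) = 0" by (rule HA.inner_T_J[OF v])
  have e: "inner (L t v) (J0 v) = m * inner v v - t * inner (Gm m v) (J0 v)"
    by (simp add: L_def inner_diff_left inner_add_left i0)
  have "m * inner (L t v) (J0 v) = m * (m * inner v v - t * inner (Gm m v) (J0 v))" unfolding e ..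
  hence "m * inner (L t v) (J0 v) = m * m * inner v v - t * (m * inner (Gm m v) (J0 v))" by (simp add: algebra_simps)
  moreover have "t * (m * inner (Gm m v) (J0 v)) \<le> 0" using Gm_diss[OF m0 v] t by (simp add: mult_nonneg_nonpos)
  ultimately have lo: "m * m * inner v v \<le> m * inner (L t v) (J0 v)" by linarith
  have "m * inner (L t v) (J0 v) \<le> \<bar>m\<bar> * (norm (L t v) * norm v)"
  proof -
    have "m * inner (L t v) (J0 v) \<le> \<bar>m * inner (L t v) (J0 v)\<bar>" by simp
    also have "\<dots> = \<bar>m\<bar> * \<bar>inner (L t v) (J0 v)\<bar>" by (simp add: abs_mult)
    also have "\<bar>inner (L t v) (J0 v)\<bar> \<le> norm (L t v) * norm (J0 v)" by (rule Cauchy_Schwarz_ineq2)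
    finally show ?thesis by (simp add: mult_left_mono)
  qed
  hence "bt * bt * (norm v * norm v) \<le> bt * (norm (L t v) * norm v)"
    using lo absm msq by (simp add: power2_eq_square power2_norm_eq_inner[symmetric])
  hence "(bt * norm v) * (bt * norm v) \<le> (bt * norm v) * norm (L t v)" by (simp add: algebra_simps)
  thus ?thesis using bt by (cases "norm v = 0") (auto simp: mult_le_cancel_left)
qed

lemma Gm_bound: assumes v: "v \<in> DA" shows "norm (Gm m v) \<le> d' * norm (A v + m *\<^sub>R J0 v) + cB * norm v"
proof -
  have "norm (Gm m v) \<le> norm (G v) + norm (Bm m v)" unfolding Gm_def by (rule norm_triangle_ineq4)
  thus ?thesis using Gb'[OF v] cB(2)[of v] by (simp add: mult.commute)
qed

definition "Kc = d' * (1 + cB / bt) / (1 - d') + cB / bt + 1"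

lemma Kc_pos: "Kc > 0"
proof -
  have "0 \<le> cB / bt" using cB(1) bt by simp
  moreover have "0 \<le> d' * (1 + cB / bt) / (1 - d')" using d'0 d'1 \<open>0 \<le> cB / bt\<close> by simp
  ultimately show ?thesis unfolding Kc_def by linarith
qed

lemma key: assumes v: "v \<in> DA" and t: "0 \<le> t" "t \<le> 1" shows "norm (Gm m v) \<le> Kc * norm (L t v)"
proof -
  define X where "X = norm (A v + m *\<^sub>R J0 v)"
  define q where "q = norm (L t v)"
  define g where "g = norm (Gm m v)"
  define V where "V = norm v"
  have "A v + m *\<^sub>R J0 v = L t v + t *\<^sub>R Gm m v" by (simp add: L_def)
  hence "X \<le> q + norm (t *\<^sub>R Gm m v)" unfolding X_def q_def by (metis norm_triangle_ineq)
  also have "norm (t *\<^sub>R Gm m v) \<le> g" using t by (simp add: g_def mult_left_le_one_le)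
  finally have X1: "X \<le> q + g" by simp
  have g1: "g \<le> d' * X + cB * V" unfolding g_def X_def V_def by (rule Gm_bound[OF v])
  have V1: "bt * V \<le> q" unfolding V_def q_def by (rule lower[OF v t(1)])
  have V2: "cB * V \<le> cB / bt * q" using V1 bt cB(1) by (simp add: field_simps)
  have "(1 - d') * X \<le> q + cB * V" using X1 g1 by (simp add: algebra_simps)
  also have "\<dots> \<le> q * (1 + cB / bt)" using V2 by (simp add: algebra_simps)
  finally have "X \<le> q * (1 + cB / bt) / (1 - d')" using d'1 by (simp add: field_simps)
  hence "d' * X \<le> d' * (q * (1 + cB / bt) / (1 - d'))" using d'0 by (rule mult_left_mono)
  hence "g \<le> d' * (q * (1 + cB / bt) / (1 - d')) + cB / bt * q" using g1 V2 by linarith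
  also have "\<dots> \<le> Kc * q"
  proof -
    have "d' * (q * (1 + cB / bt) / (1 - d')) + cB / bt * q = (Kc - 1) * q" by (simp add: Kc_def algebra_simps)
    also have "\<dots> \<le> Kc * q" unfolding q_def by (simp add: algebra_simps)
    finally show ?thesis .
  qed
  finally show ?thesis by (simp add: g_def q_def)
qed

definition "surjL t \<longleftrightarrow> (\<forall>h. \<exists>v\<in>DA. L t v = h)"

lemma step:
  assumes st: "surjL t" and t: "0 \<le> t" "t \<le> 1" and s: "0 \<le> s" and d: "\<bar>s - t\<bar> * Kc \<le> 1/2"
  shows "surjL s"
  unfolding surjL_def
proof
  fix h
  define Li where "Li u = (SOME v. v \<in> DA \<and> L t v = u)" for u
  have Li: "Li u \<in> DA" "L t (Li u) = u" for u
  proof -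
    have "\<exists>v. v \<in> DA \<and> L t v = u" using st unfolding surjL_def by blast
    hence "Li u \<in> DA \<and> L t (Li u) = u" unfolding Li_def by (rule someI_ex)
    thus "Li u \<in> DA" "L t (Li u) = u" by auto
  qed
  define Ph where "Ph u = h + (s - t) *\<^sub>R Gm m (Li u)" for u
  have contr: "dist (Ph u1) (Ph u2) \<le> 1/2 * dist u1 u2" for u1 u2
  proof -
    have "Ph u1 - Ph u2 = (s - t) *\<^sub>R Gm m (Li u1 - Li u2)"
      by (simp add: Ph_def Gm_diff[OF m0 Li(1) Li(1)] scaleR_diff_right)
    hence "dist (Ph u1) (Ph u2) = \<bar>s - t\<bar> * norm (Gm m (Li u1 - Li u2))" by (simp add: dist_norm)
    also have "norm (Gm m (Li u1 - Li u2)) \<le> Kc * norm (L t (Li u1 - Li u2))"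
      by (rule key[OF HA.mem_diff[OF Li(1) Li(1)] t])
    also have "L t (Li u1 - Li u2) = u1 - u2" by (simp add: L_diff[OF Li(1) Li(1)] Li(2))
    finally have "dist (Ph u1) (Ph u2) \<le> (\<bar>s - t\<bar> * Kc) * norm (u1 - u2)" by (simp add: mult_left_mono mult.assoc)
    also have "\<dots> \<le> 1/2 * norm (u1 - u2)" by (rule mult_right_mono[OF d]) simp
    finally show ?thesis by (simp add: dist_norm)
  qed
  obtain u where u: "Ph u = u" using banach_fix_type[of "1/2" Ph] contr by auto
  have "L s (Li u) = L t (Li u) - (s - t) *\<^sub>R Gm m (Li u)" by (simp add: L_def algebra_simps)
  also have "\<dots> = h" using u Li(2)[of u] by (simp add: Ph_def algebra_simps)
  finally show "\<exists>v\<in>DA. L s v = h" using Li(1) by blast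
qed

lemma surj0: "surjL 0"
  unfolding surjL_def L_def using HA.surj[OF m0] by simp

lemma surj1: "surjL 1"
proof -
  define N :: nat where "N = nat (ceiling (2 * Kc)) + 1"
  have N0: "real N > 0" by (simp add: N_def)
  have NK: "2 * Kc \<le> real N" unfolding N_def using Kc_pos by linarith
  have "k \<le> N \<Longrightarrow> surjL (real k / real N)" for k
  proof (induction k)
    case 0 thus ?case using surj0 by simp
  next
    case (Suc k)
    hence IH: "surjL (real k / real N)" by simp
    show ?case
    proof (rule step[OF IH])
      show "0 \<le> real k / real N" by simp
      show "real k / real N \<le> 1" using Suc.prems N0 by (simp add: field_simps)
      show "0 \<le> real (Suc k) / real N" by simp
      have "\<bar>real (Suc k) / real N - real k / real N\<bar> = 1 / real N" using N0 by (simp add: field_simps)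
      hence "\<bar>real (Suc k) / real N - real k / real N\<bar> * Kc = Kc / real N" by simp
      also have "\<dots> \<le> 1/2" using NK N0 by (simp add: field_simps)
      finally show "\<bar>real (Suc k) / real N - real k / real N\<bar> * Kc \<le> 1/2" .
    qed
  qed
  from this[of N] show ?thesis using N0 by simp
qed

lemma Aop_surj: "\<exists>p\<in>DD. Aop p + m *\<^sub>R (J0 (fst p), J1 (snd p)) = y"
proof -
  obtain f g where y: "y = (f, g)" by (cases y)
  obtain v where v: "v \<in> DA" "L 1 v = f - Gam (HO.res m g)" using surj1 unfolding surjL_def by blast
  define \<phi> where "\<phi> = HO.res m (g + (1 + m) *\<^sub>R J1 (Sd v))"
  have \<phi>: "\<phi> \<in> DO" "Om \<phi> + m *\<^sub>R J1 \<phi> = g + (1 + m) *\<^sub>R J1 (Sd v)" using HO.res[OF m0] by (auto simp: \<phi>_def)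
  interpret Rs: bounded_linear "HO.res m" by (rule HO.res_bl[OF m0])
  have G\<phi>: "Gam \<phi> = Gam (HO.res m g) + Bm m v"
    unfolding \<phi>_def Bm_def Rs.add Rs.scale
    by (simp add: Gam_plus Gam_sc HO.res(1)[OF m0] HO.mem_scale)
  define p where "p = (v, \<phi> - Sd v)"
  have pD: "p \<in> DD" unfolding p_def DD_def using v(1) \<phi>(1) by blast
  have "Aop p + m *\<^sub>R (J0 (fst p), J1 (snd p)) = (A v + Gam \<phi> - G v + m *\<^sub>R J0 v, Om \<phi> - J1 (Sd v) + m *\<^sub>R J1 (\<phi> - Sd v))"
    unfolding p_def Aop_rep by simp
  also have "A v + Gam \<phi> - G v + m *\<^sub>R J0 v = L 1 v + Gam (HO.res m g)"
    unfolding G\<phi> L_def Gm_def by (simp add: algebra_simps)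
  also have "\<dots> = f" using v(2) by simp
  also have "Om \<phi> - J1 (Sd v) + m *\<^sub>R J1 (\<phi> - Sd v) = (Om \<phi> + m *\<^sub>R J1 \<phi>) - (1 + m) *\<^sub>R J1 (Sd v)"
    by (simp add: algebra_simps)
  also have "\<dots> = g" unfolding \<phi>(2) by simp
  finally show ?thesis using pD y by blast
qed

end

context main begin

definition JJ :: "'a \<times> 'b \<Rightarrow> 'a \<times> 'b" where "JJ p = (J0 (fst p), J1 (snd p))"

lemma JJ_eq: "(\<lambda>(v, w). (J0 v, J1 w)) = JJ"
  by (rule ext) (simp add: JJ_def case_prod_unfold)

lemma inner_JJ_left: "inner (JJ p) q = - inner p (JJ q)"
  by (simp add: JJ_def inner_prod_def HA.inner_J_left HO.inner_J_left)

lemma DD_JJ: "p \<in> DD \<Longrightarrow> JJ p \<in> DD"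
  unfolding DD_iff JJ_def by (simp add: Sd_props(3) HA.mem_J HO.mem_J flip: HO.add)

lemma Aop_JJ: assumes p: "p \<in> DD" shows "Aop (JJ p) = JJ (Aop p)"
proof -
  have a: "fst p \<in> DA" and b: "snd p + Sd (fst p) \<in> DO" using p unfolding DD_iff by auto
  have e1: "J1 (snd p) + Sd (J0 (fst p)) = J1 (snd p + Sd (fst p))" by (simp add: Sd_props(3))
  show ?thesis unfolding Aop_def JJ_def fst_conv snd_conv e1
    by (simp add: HA.T_J[OF a] Gam_J[OF b] G_J[OF a] HO.T_J[OF b] Sd_props(3) del: HO.add)
qed

lemma dense_DD: "closure DD = UNIV"
proof -
  have "x \<in> closure DD" for x :: "'a \<times> 'b"
  proof -
    obtain a w where x: "x = (a, w)" by (cases x)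
    have "a \<in> closure DA" using HA.dense by simp
    then obtain as where asD: "\<And>n. as n \<in> DA" and as: "as \<longlonglongrightarrow> a"
      unfolding closure_sequential by blast
    have "w + Sd a \<in> closure DO" using HO.dense by simp
    then obtain ps where psD: "\<And>n. ps n \<in> DO" and ps: "ps \<longlonglongrightarrow> w + Sd a"
      unfolding closure_sequential by blast
    have mem: "(as n, ps n - Sd (as n)) \<in> DD" for n unfolding DD_def using asD psD by blast
    have "(\<lambda>n. (as n, ps n - Sd (as n))) \<longlonglongrightarrow> (a, (w + Sd a) - Sd a)"
      by (intro tendsto_Pair tendsto_diff as ps bounded_linear.tendsto[OF Sd_props(2)])
    hence "(\<lambda>n. (as n, ps n - Sd (as n))) \<longlonglongrightarrow> x" by (simp add: x)
    thus ?thesis unfolding closure_sequential using mem by (intro exI[of _ "\<lambda>n. (as n, ps n - Sd (as n))"]) auto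
  qed
  thus ?thesis by auto
qed

lemma adj_char:
  assumes h: "\<forall>x\<in>DD. inner (Aop x) y = inner x z"
  shows "y \<in> DD \<and> z = Aop y"
proof -
  obtain dl bt where dl: "dl < 1" and bt: "bt > 0" and Gb: "\<forall>v\<in>DA. norm (G v) \<le> dl * norm (A v + bt *\<^sub>R J0 v)"
    using G_bound' by blast
  interpret Mp: main2 J0 DA A J1 DO Om Gam dl bt bt by unfold_locales (use dl bt Gb in auto)
  interpret Mm: main2 J0 DA A J1 DO Om Gam dl bt "- bt" by unfold_locales (use dl bt Gb in auto)
  obtain q where qD: "q \<in> DD" and q: "Aop q + (- bt) *\<^sub>R JJ q = z + (- bt) *\<^sub>R JJ y"
    using Mm.Aop_surj[of "z + (- bt) *\<^sub>R JJ y"] unfolding JJ_def by blast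
  have orth: "inner (Aop p + bt *\<^sub>R JJ p) (y - q) = 0" if p: "p \<in> DD" for p
  proof -
    have "inner (Aop p + bt *\<^sub>R JJ p) (y - q) = inner (Aop p) y - inner (Aop p) q + bt * inner (JJ p) y - bt * inner (JJ p) q"
      by (simp add: inner_add_left inner_diff_right algebra_simps)
    also have "\<dots> = inner p z - inner p (Aop q) - bt * inner p (JJ y) + bt * inner p (JJ q)"
      using h p Aop_sym[OF p qD] by (simp add: inner_JJ_left)
    also have "\<dots> = inner p (z - bt *\<^sub>R JJ y - (Aop q - bt *\<^sub>R JJ q))"
      by (simp add: inner_diff_right algebra_simps)
    also have "z - bt *\<^sub>R JJ y - (Aop q - bt *\<^sub>R JJ q) = 0" using q by (simp add: algebra_simps)
    finally show ?thesis by simp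
  qed
  obtain p where pD: "p \<in> DD" and p: "Aop p + bt *\<^sub>R JJ p = y - q"
    using Mp.Aop_surj[of "y - q"] unfolding JJ_def by blast
  have "inner (y - q) (y - q) = 0" using orth[OF pD] p by simp
  hence yq: "y = q" by simp
  have "z = Aop q + (- bt) *\<^sub>R JJ q - (- bt) *\<^sub>R JJ y" using q by (simp add: algebra_simps)
  hence "z = Aop y" using yq by simp
  thus ?thesis using qD yq by simp
qed

lemma cinner_JJ: "cinner (\<lambda>(v, w). (J0 v, J1 w)) x y = Complex (inner x y) (inner (JJ x) y)"
  by (simp add: cinner_def JJ_eq)

lemma sa_Aop: "self_adjoint (\<lambda>(v, w). (J0 v, J1 w)) DD Aop"
  unfolding self_adjoint_def
proof (intro conjI dense_DD set_eqI iffI)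
  fix yz :: "('a \<times> 'b) \<times> ('a \<times> 'b)"
  assume "yz \<in> {(y, z). \<forall>x\<in>DD. cinner (\<lambda>(v, w). (J0 v, J1 w)) (Aop x) y = cinner (\<lambda>(v, w). (J0 v, J1 w)) x z}"
  then obtain y z where yz: "yz = (y, z)" and h: "\<forall>x\<in>DD. cinner (\<lambda>(v, w). (J0 v, J1 w)) (Aop x) y = cinner (\<lambda>(v, w). (J0 v, J1 w)) x z"
    by blast
  have "\<forall>x\<in>DD. inner (Aop x) y = inner x z" using h by (simp add: cinner_JJ)
  hence "y \<in> DD \<and> z = Aop y" by (rule adj_char)
  thus "yz \<in> {(x, Aop x) |x. x \<in> DD}" using yz by blast
next
  fix yz :: "('a \<times> 'b) \<times> ('a \<times> 'b)"
  assume "yz \<in> {(x, Aop x) |x. x \<in> DD}"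
  then obtain y where yz: "yz = (y, Aop y)" and y: "y \<in> DD" by blast
  have "cinner (\<lambda>(v, w). (J0 v, J1 w)) (Aop x) y = cinner (\<lambda>(v, w). (J0 v, J1 w)) x (Aop y)" if x: "x \<in> DD" for x
  proof -
    have "inner (Aop x) y = inner x (Aop y)" by (rule Aop_sym[OF x y])
    moreover have "inner (JJ (Aop x)) y = inner (JJ x) (Aop y)"
      using Aop_JJ[OF x] Aop_sym[OF DD_JJ[OF x] y] by simp
    ultimately show ?thesis by (simp add: cinner_JJ)
  qed
  thus "yz \<in> {(y, z). \<forall>x\<in>DD. cinner (\<lambda>(v, w). (J0 v, J1 w)) (Aop x) y = cinner (\<lambda>(v, w). (J0 v, J1 w)) x z}"
    using yz by blast
qed

lemma sa_cong: "(\<And>x. x \<in> D \<Longrightarrow> T x = T' x) \<Longrightarrow> self_adjoint J D T = self_adjoint J D T'"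
  unfolding self_adjoint_def
proof -
  assume e: "\<And>x. x \<in> D \<Longrightarrow> T x = T' x"
  have 1: "{(y, z). \<forall>x\<in>D. cinner J (T x) y = cinner J x z} = {(y, z). \<forall>x\<in>D. cinner J (T' x) y = cinner J x z}"
    using e by auto
  have 2: "{(x, T x) |x. x \<in> D} = {(x, T' x) |x. x \<in> D}" using e by force
  show "(closure D = UNIV \<and> {(y, z). \<forall>x\<in>D. cinner J (T x) y = cinner J x z} = {(x, T x) |x. x \<in> D}) =
        (closure D = UNIV \<and> {(y, z). \<forall>x\<in>D. cinner J (T' x) y = cinner J x z} = {(x, T' x) |x. x \<in> D})"
    unfolding 1 2 ..
qed

lemma sa_final: "self_adjoint (\<lambda>(v, w). (J0 v, J1 w)) DD (\<lambda>p. Lim at_top (fD p))"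
  using sa_Aop sa_cong[of DD "\<lambda>p. Lim at_top (fD p)" Aop] fD_Lim(2) by simp

end

theorem proposition1:
  fixes J0 :: "'a::{real_inner,complete_space} \<Rightarrow> 'a"
    and J1 :: "'b::{real_inner,complete_space} \<Rightarrow> 'b"
    and DA :: "'a set" and A :: "'a \<Rightarrow> 'a"
    and DO :: "'b set" and Om :: "'b \<Rightarrow> 'b"
    and Gam :: "'b \<Rightarrow> 'a"
  assumes J0: "cstruct J0" and J1: "cstruct J1"
    and A_sa: "self_adjoint J0 DA A"
    and Om_sa: "self_adjoint J1 DO Om"
    and Gam_add: "\<forall>\<phi>\<in>DO. \<forall>\<psi>\<in>DO. Gam (\<phi> + \<psi>) = Gam \<phi> + Gam \<psi>"
    and Gam_scale: "\<forall>\<phi>\<in>DO. \<forall>c. Gam (csc J1 c \<phi>) = csc J0 c (Gam \<phi>)"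
    and Gam_bound: "\<exists>C. \<forall>\<phi>\<in>DO. (norm (Gam \<phi>))^2 \<le> C * (norm (Om \<phi> + J1 \<phi>))^2"
    and G_lim: "\<forall>v\<in>DA. \<exists>g. ((\<lambda>R. Gam (PhiR J1 DO Om R
                      (badj J0 J1 (\<lambda>x. Gam (resolv J1 DO Om 1 x)) v))) \<longlongrightarrow> g) at_top"
    and G_bound: "\<exists>\<delta><1. \<exists>\<beta>>0. \<forall>v\<in>DA.
         norm (Lim at_top (\<lambda>R. Gam (PhiR J1 DO Om R
                      (badj J0 J1 (\<lambda>x. Gam (resolv J1 DO Om 1 x)) v))))
           \<le> \<delta> * norm (A v + \<beta> *\<^sub>R J0 v)"
  shows "(\<forall>R>0. cbounded J1 J0 (\<lambda>w. Gam (PhiR J1 DO Om R w)))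
    \<and> cbounded J1 J0 (\<lambda>x. Gam (resolv J1 DO Om 1 x))
    \<and> (let Sd = badj J0 J1 (\<lambda>x. Gam (resolv J1 DO Om 1 x));
           DD = {(v, \<phi> - Sd v) | v \<phi>. v \<in> DA \<and> \<phi> \<in> DO};
           f = (\<lambda>(v, w) R. (A v + Gam (PhiR J1 DO Om R w),
                  badj J0 J1 (\<lambda>x. Gam (PhiR J1 DO Om R x)) v + Om (PhiR J1 DO Om R w)))
       in (\<forall>p\<in>DD. \<exists>q. (f p \<longlongrightarrow> q) at_top)
          \<and> self_adjoint (\<lambda>(v, w). (J0 v, J1 w)) DD (\<lambda>p. Lim at_top (f p)))"
proof -
  interpret M: main J0 DA A J1 DO Om Gam
    by unfold_locales (use J0 J1 A_sa Om_sa Gam_add Gam_scale Gam_bound G_lim G_bound in auto)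
  have c1: "\<forall>R>0. cbounded J1 J0 (\<lambda>w. Gam (PhiR J1 DO Om R w))"
  proof (intro allI impI)
    fix R :: real assume R: "R > 0"
    have e: "(\<lambda>w. Gam (PhiR J1 DO Om R w)) = M.GP R" by (rule ext) (simp add: M.GP_def M.PhiR_Phi[OF R])
    show "cbounded J1 J0 (\<lambda>w. Gam (PhiR J1 DO Om R w))"
      unfolding e cbounded_def using M.GP_bl M.GP_J R by auto
  qed
  have eS: "(\<lambda>x. Gam (resolv J1 DO Om 1 x)) = M.S" by (rule ext) (simp add: M.S_def M.HO.res_def)
  have c2: "cbounded J1 J0 (\<lambda>x. Gam (resolv J1 DO Om 1 x))"
    unfolding eS cbounded_def using M.S_bl M.S_J by auto
  have eSd: "badj J0 J1 (\<lambda>x. Gam (resolv J1 DO Om 1 x)) = M.Sd" by (rule M.Sd_eq)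
  have eDD: "{(v, \<phi> - M.Sd v) | v \<phi>. v \<in> DA \<and> \<phi> \<in> DO} = M.DD" by (simp add: M.DD_def)
  have c3: "(\<forall>p\<in>M.DD. \<exists>q. (M.fD p \<longlongrightarrow> q) at_top)" using M.fD_Lim(1) by blast
  show ?thesis unfolding Let_def eSd eDD M.fD_def[symmetric]
    using c1 c2 c3 M.sa_final by blast
qed

end
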